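(* Let $A^{I_1,\dots,I_s}_{\sigma_1,\dots,\sigma_s,i_{s+1},\dots,i_{n-1}}$ ($s=0,\dots,n-1$, $|I_l|=r-1$) be smooth functions on $V^{r-1}$ with the symmetry property described in the context, let $\mathcal{L}$ be defined by $$\mathcal{L}^{I_1,\dots,I_s}_{\sigma_1,\dots,\sigma_s,i_{s+1},\dots,i_n}=\sum_{k=1}^{s}(-1)^{k-1}\partial^{I_k}_{\sigma_k}A^{I_1,\dots,\widehat{I_k},\dots,I_s}_{\sigma_1,\dots,\widehat{\sigma_k},\dots,\sigma_s,i_{s+1},\dots,i_n}+\sum_{k=s+1}^{n}(-1)^{k-1}d_{i_k}A^{I_1,\dots,I_s}_{\sigma_1,\dots,\sigma_s,i_{s+1},\dots,\widehat{i_k},\dots,i_n}$$ ($d_j=d^{r-1}_j$), and let $L=\sum_{s=0}^{n}\frac{1}{s!(n-s)!}\sum_{|I_1|,\dots,|I_s|=r-1}\mathcal{L}^{I_1,\dots,I_s}_{\sigma_1,\dots,\sigma_s,i_{s+1},\dots,i_n}\mathcal{J}^{\sigma_1,\dots,\sigma_s,i_{s+1},\dots,i_n}_{I_1,\dots,I_s}$. Then there exist smooth functions $V^j$, $j=1,\dots,n$, on $V^r$ such that $$L=\sum_{j=1}^n d_jV^j .$$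
   Context: $\pi:Y\to X$ is a fibre bundle, $\dim X=n$, fibre dimension $m$, with adapted chart $(V,\psi)$, $\psi=(x^i,y^\sigma)$, and associated charts $(V^k,\psi^k)$ on jet prolongations $J^kY$ with coordinates $x^i,y^\sigma_J$, $|J|\le k$ ($y^\sigma_J$ symmetric in $J$). $\partial^J_\sigma=\frac{r_1!\cdots r_n!}{|J|!}\partial/\partial y^\sigma_J$ ($r_l$ the multiplicity of $l$ in $J$); sums over multi-indices run over all ordered tuples and repeated indices are summed. Formal derivatives: $d_i^{p}=\partial/\partial x^i+\sum_{k=0}^{p-1}y^\sigma_{ij_1\dots j_k}\partial^{j_1\dots j_k}_\sigma$. Hyper-Jacobians: $\mathcal{J}^{\sigma_1,\dots,\sigma_s,i_{s+1},\dots,i_n}_{I_1,\dots,I_s}=\sum_{i_1,\dots,i_s}\varepsilon^{i_1\dots i_n}\prod_{l=1}^{s}y^{\sigma_l}_{I_li_l}$. Symmetry property: $A^{I_{P(1)},\dots,I_{P(s)}}_{\sigma_{P(1)},\dots,\sigma_{P(s)},i_{Q(s+1)},\dots,i_{Q(q)}}=(-1)^{|P|+|Q|}A^{I_1,\dots,I_s}_{\sigma_1,\dots,\sigma_s,i_{s+1},\dots,i_q}$ for all permutations $P$ of $\{1,\dots,s\}$ and $Q$ of $\{s+1,\dots,q\}$. *)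

theory Defs
  imports "HOL-Analysis.Analysis" "HOL-Library.Multiset" "HOL-Combinatorics.Permutations"
begin

(* Coordinates on the jet prolongations J^k Y over an adapted chart.
   Base indices i (0..n-1), fibre indices sigma (0..m-1).
   A coordinate label is either x^i  (XC i)  or  y^sigma_J  (YC sigma J), where the
   multi-index J is stored as a multiset (y^sigma_J is symmetric in J).
   A point of (the coordinate image of) the jet space is an assignment of reals to
   labels; a function on V^k is a function of such assignments depending only on the
   coordinates of order <= k. *)

datatype jlabel = XC nat | YC nat "nat multiset"

type_synonym jpoint = "jlabel \<Rightarrow> real"

definition jcoords :: "nat \<Rightarrow> nat \<Rightarrow> nat \<Rightarrow> jlabel set" where
  "jcoords n m k = {XC i | i. i < n} \<union>
     {YC \<sigma> J | \<sigma> J. \<sigma> < m \<and> set_mset J \<subseteq> {..<n} \<and> size J \<le> k}"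

(* the coordinate domain V (= preimage of an open subset of psi(V) in R^{n+m}):
   open, and determined by the coordinates x^i, y^sigma only *)
definition chart_domain :: "nat \<Rightarrow> nat \<Rightarrow> jpoint set \<Rightarrow> bool" where
  "chart_domain n m V \<longleftrightarrow> open V \<and>
     (\<forall>p q. (\<forall>c \<in> jcoords n m 0. p c = q c) \<longrightarrow> (p \<in> V \<longleftrightarrow> q \<in> V))"

definition pd :: "jlabel \<Rightarrow> (jpoint \<Rightarrow> real) \<Rightarrow> jpoint \<Rightarrow> real" where
  "pd c F p = deriv (\<lambda>t. F (p(c := p c + t))) 0"

fun pds :: "jlabel list \<Rightarrow> (jpoint \<Rightarrow> real) \<Rightarrow> jpoint \<Rightarrow> real" where
  "pds [] F = F"
| "pds (c # cs) F = pd c (pds cs F)"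

definition smooth_on :: "jpoint set \<Rightarrow> (jpoint \<Rightarrow> real) \<Rightarrow> bool" where
  "smooth_on U F \<longleftrightarrow> (\<forall>cs. continuous_on U (pds cs F) \<and>
     (\<forall>c. \<forall>p \<in> U. (\<lambda>t. pds cs F (p(c := p c + t))) differentiable (at 0)))"

definition jet_smooth :: "nat \<Rightarrow> nat \<Rightarrow> nat \<Rightarrow> jpoint set \<Rightarrow> (jpoint \<Rightarrow> real) \<Rightarrow> bool" where
  "jet_smooth n m k V F \<longleftrightarrow>
     (\<forall>p q. (\<forall>c \<in> jcoords n m k. p c = q c) \<longrightarrow> F p = F q) \<and> smooth_on V F"

definition tuples :: "nat \<Rightarrow> 'a set \<Rightarrow> 'a list set" where
  "tuples k S = {xs. length xs = k \<and> set xs \<subseteq> S}"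

definition wpd :: "nat \<Rightarrow> nat \<Rightarrow> nat list \<Rightarrow> (jpoint \<Rightarrow> real) \<Rightarrow> jpoint \<Rightarrow> real" where
  "wpd n \<sigma> J F p = (\<Prod>l<n. fact (count (mset J) l)) / fact (length J) * pd (YC \<sigma> (mset J)) F p"

definition fder :: "nat \<Rightarrow> nat \<Rightarrow> nat \<Rightarrow> nat \<Rightarrow> (jpoint \<Rightarrow> real) \<Rightarrow> jpoint \<Rightarrow> real" where
  "fder n m q i F p = pd (XC i) F p +
     (\<Sum>k<q. \<Sum>\<sigma><m. \<Sum>js \<in> tuples k {..<n}. p (YC \<sigma> (mset (i # js))) * wpd n \<sigma> js F p)"

definition levi :: "nat \<Rightarrow> nat list \<Rightarrow> real" where
  "levi n is = (if length is = n \<and> set is = {..<n}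
      then real_of_int (sign (\<lambda>l. if l < n then is ! l else l)) else 0)"

definition hyperjac :: "nat \<Rightarrow> nat list list \<Rightarrow> nat list \<Rightarrow> nat list \<Rightarrow> jpoint \<Rightarrow> real" where
  "hyperjac n Is \<sigma>s is p = (\<Sum>js \<in> tuples (length Is) {..<n}.
      levi n (js @ is) * (\<Prod>l<length Is. p (YC (\<sigma>s ! l) (mset ((Is ! l) @ [js ! l])))))"

definition del_nth :: "nat \<Rightarrow> 'a list \<Rightarrow> 'a list" where
  "del_nth k xs = take k xs @ drop (Suc k) xs"

(* A Is \<sigma>s is  =  A^{I_1..I_s}_{\<sigma>_1..\<sigma>_s, i_{s+1}..i_{n-1}}  (s = length Is) *)
type_synonym afam = "nat list list \<Rightarrow> nat list \<Rightarrow> nat list \<Rightarrow> jpoint \<Rightarrow> real"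

(* \<L>^{I_1..I_s}_{\<sigma>_1..\<sigma>_s, i_{s+1}..i_n}, with d_j = d_j^{r-1};
   0-based k: sign (-1)^k in the first sum, (-1)^(s+k) in the second *)
definition calL :: "nat \<Rightarrow> nat \<Rightarrow> nat \<Rightarrow> afam \<Rightarrow> nat list list \<Rightarrow> nat list \<Rightarrow> nat list \<Rightarrow> jpoint \<Rightarrow> real" where
  "calL n m r A Is \<sigma>s is p =
     (\<Sum>k<length Is. (-1) ^ k * wpd n (\<sigma>s ! k) (Is ! k) (A (del_nth k Is) (del_nth k \<sigma>s) is) p)
   + (\<Sum>k<length is. (-1) ^ (length Is + k) * fder n m (r - 1) (is ! k) (A Is \<sigma>s (del_nth k is)) p)"

definition Lagr :: "nat \<Rightarrow> nat \<Rightarrow> nat \<Rightarrow> afam \<Rightarrow> jpoint \<Rightarrow> real" where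
  "Lagr n m r A p = (\<Sum>s\<le>n. 1 / (fact s * fact (n - s)) *
     (\<Sum>Is \<in> tuples s (tuples (r - 1) {..<n}). \<Sum>\<sigma>s \<in> tuples s {..<m}. \<Sum>is \<in> tuples (n - s) {..<n}.
        calL n m r A Is \<sigma>s is p * hyperjac n Is \<sigma>s is p))"

end

theory Submission
  imports Defs "HOL-Combinatorics.Multiset_Permutations"
begin

definition line :: "jpoint \<Rightarrow> jlabel \<Rightarrow> real \<Rightarrow> jpoint" where
  "line p c t = p(c := p c + t)"

lemma line_cont: "continuous_on UNIV (line p c)"
  unfolding line_def
  apply (intro continuous_on_coordinatewise_then_product)
  subgoal for i by (cases "i = c") (auto intro!: continuous_intros)
  done

lemma line_0[simp]: "line p c 0 = p" by (simp add: line_def)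

lemma line_ev:
  assumes "open V" "p \<in> V"
  shows "eventually (\<lambda>t. line p c t \<in> V) (nhds 0)"
proof -
  have "isCont (line p c) 0" using line_cont continuous_on_eq_continuous_at by blast
  hence "(line p c \<longlongrightarrow> line p c 0) (nhds 0)"
    by (metis isCont_def tendsto_at_iff_tendsto_nhds)
  thus ?thesis using assms by (auto dest: topological_tendstoD)
qed

lemma pd_line: "pd c F p = deriv (\<lambda>t. F (line p c t)) 0"
  by (simp add: pd_def line_def)

definition eqon :: "jpoint set \<Rightarrow> (jpoint \<Rightarrow> real) \<Rightarrow> (jpoint \<Rightarrow> real) \<Rightarrow> bool" where
  "eqon V F G \<longleftrightarrow> (\<forall>q\<in>V. F q = G q)"

lemma pd_local:
  assumes "open V" "p \<in> V" "eqon V F G"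
  shows "pd c F p = pd c G p"
  unfolding pd_line
  by (rule deriv_cong_ev[OF _ refl]) (use line_ev[OF assms(1,2), of c] assms(3) in \<open>auto simp: eqon_def elim: eventually_mono\<close>)

lemma diff_local:
  assumes "open V" "p \<in> V" "eqon V F G" "(\<lambda>t. F (line p c t)) differentiable (at 0)"
  shows "(\<lambda>t. G (line p c t)) differentiable (at 0)"
proof -
  have ev: "eventually (\<lambda>t. F (line p c t) = G (line p c t)) (nhds 0)"
    using line_ev[OF assms(1,2), of c] assms(3) by (auto simp: eqon_def elim: eventually_mono)
  from assms(4) obtain D where "((\<lambda>t. F (line p c t)) has_real_derivative D) (at 0)"
    using DERIV_deriv_iff_real_differentiable by blast
  hence "((\<lambda>t. G (line p c t)) has_real_derivative D) (at 0)"
    using DERIV_cong_ev[OF refl ev refl] by simp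
  thus ?thesis using real_differentiable_def by blast
qed

definition ldiff :: "(jpoint \<Rightarrow> real) \<Rightarrow> jpoint \<Rightarrow> bool" where
  "ldiff F p \<longleftrightarrow> (\<forall>c. (\<lambda>t. F (line p c t)) differentiable (at 0))"

lemma ldiff_D: "ldiff F p \<Longrightarrow> ((\<lambda>t. F (line p c t)) has_real_derivative pd c F p) (at 0)"
  unfolding ldiff_def pd_line using DERIV_deriv_iff_real_differentiable by blast

lemma ldiff_I: "(\<And>c. \<exists>D. ((\<lambda>t. F (line p c t)) has_real_derivative D) (at 0)) \<Longrightarrow> ldiff F p"
  unfolding ldiff_def using real_differentiable_def by blast

lemma ldiff_add: "ldiff F p \<Longrightarrow> ldiff G p \<Longrightarrow> ldiff (\<lambda>q. F q + G q) p"
  by (rule ldiff_I) (use ldiff_D DERIV_add in blast)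

lemma ldiff_mult: "ldiff F p \<Longrightarrow> ldiff G p \<Longrightarrow> ldiff (\<lambda>q. F q * G q) p"
  by (rule ldiff_I) (use ldiff_D DERIV_mult in blast)

lemma ldiff_const: "ldiff (\<lambda>q. k) p"
  by (rule ldiff_I) (use DERIV_const in blast)

lemma ldiff_coord: "ldiff (\<lambda>q. q d) p"
proof (rule ldiff_I)
  fix c
  show "\<exists>D. ((\<lambda>t. line p c t d) has_real_derivative D) (at 0)"
  proof (cases "d = c")
    case True
    have "((\<lambda>t. p c + t) has_real_derivative 1) (at 0)"
      by (auto intro!: derivative_eq_intros)
    thus ?thesis using True by (auto simp: line_def)
  next
    case False
    thus ?thesis by (auto simp: line_def intro!: exI[of _ 0])
  qed
qed

lemma ldiff_sum: "finite S \<Longrightarrow> (\<And>i. i \<in> S \<Longrightarrow> ldiff (F i) p) \<Longrightarrow> ldiff (\<lambda>q. \<Sum>i\<in>S. F i q) p"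
  by (induction S rule: finite_induct) (auto intro!: ldiff_add ldiff_const)

lemma ldiff_prod: "finite S \<Longrightarrow> (\<And>i. i \<in> S \<Longrightarrow> ldiff (F i) p) \<Longrightarrow> ldiff (\<lambda>q. \<Prod>i\<in>S. F i q) p"
  by (induction S rule: finite_induct) (auto intro!: ldiff_mult ldiff_const)

lemma pd_add: "ldiff F p \<Longrightarrow> ldiff G p \<Longrightarrow> pd c (\<lambda>q. F q + G q) p = pd c F p + pd c G p"
  unfolding pd_line by (rule DERIV_imp_deriv) (use ldiff_D[unfolded pd_line] DERIV_add in blast)

lemma pd_mult: "ldiff F p \<Longrightarrow> ldiff G p \<Longrightarrow> pd c (\<lambda>q. F q * G q) p = pd c F p * G p + F p * pd c G p"
proof -
  assume a: "ldiff F p" "ldiff G p"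
  have "((\<lambda>t. F (line p c t) * G (line p c t)) has_real_derivative
     pd c F p * G (line p c 0) + F (line p c 0) * pd c G p) (at 0)"
    using DERIV_mult[OF ldiff_D[OF a(1)] ldiff_D[OF a(2)], of c c] by (simp add: mult.commute)
  thus ?thesis unfolding pd_line[of c "\<lambda>q. F q * G q"] by (simp add: DERIV_imp_deriv)
qed

lemma pd_const: "pd c (\<lambda>q. k) p = 0"
  unfolding pd_line by simp

lemma pd_coord: "pd c (\<lambda>q. q d) p = (if c = d then 1 else 0)"
proof (cases "d = c")
  case True
  have "((\<lambda>t. p c + t) has_real_derivative 1) (at 0)"
    by (auto intro!: derivative_eq_intros)
  thus ?thesis using True unfolding pd_line by (auto simp: line_def DERIV_imp_deriv)
next
  case False
  thus ?thesis unfolding pd_line by (auto simp: line_def)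
qed

lemma pd_sum: "finite S \<Longrightarrow> (\<And>i. i \<in> S \<Longrightarrow> ldiff (F i) p) \<Longrightarrow>
   pd c (\<lambda>q. \<Sum>i\<in>S. F i q) p = (\<Sum>i\<in>S. pd c (F i) p)"
  by (induction S rule: finite_induct) (auto simp: pd_const pd_add ldiff_sum)

lemma pd_prod: "finite S \<Longrightarrow> (\<And>i. i \<in> S \<Longrightarrow> ldiff (F i) p) \<Longrightarrow>
   pd c (\<lambda>q. \<Prod>i\<in>S. F i q) p = (\<Sum>i\<in>S. pd c (F i) p * (\<Prod>j\<in>S-{i}. F j p))"
proof (induction S rule: finite_induct)
  case empty
  then show ?case by (simp add: pd_const)
next
  case (insert x S)
  have d: "ldiff (\<lambda>q. \<Prod>i\<in>S. F i q) p" using insert by (auto intro!: ldiff_prod)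
  have "pd c (\<lambda>q. \<Prod>i\<in>insert x S. F i q) p = pd c (\<lambda>q. F x q * (\<Prod>i\<in>S. F i q)) p"
    using insert by simp
  also have "\<dots> = pd c (F x) p * (\<Prod>i\<in>S. F i p) + F x p * (\<Sum>i\<in>S. pd c (F i) p * (\<Prod>j\<in>S-{i}. F j p))"
    using insert d by (simp add: pd_mult)
  also have "\<dots> = (\<Sum>i\<in>insert x S. pd c (F i) p * (\<Prod>j\<in>insert x S-{i}. F j p))"
  proof -
    have "(\<Sum>i\<in>S. pd c (F i) p * (\<Prod>j\<in>insert x S-{i}. F j p)) =
          (\<Sum>i\<in>S. F x p * (pd c (F i) p * (\<Prod>j\<in>S-{i}. F j p)))"
    proof (rule sum.cong[OF refl])
      fix i assume "i \<in> S"
      hence "insert x S - {i} = insert x (S - {i})" using insert by auto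
      thus "pd c (F i) p * (\<Prod>j\<in>insert x S-{i}. F j p) = F x p * (pd c (F i) p * (\<Prod>j\<in>S-{i}. F j p))"
        using insert by simp
    qed
    moreover have "insert x S - {x} = S" using insert by auto
    ultimately show ?thesis using insert by (simp add: sum_distrib_left)
  qed
  finally show ?case .
qed

lemma fder_alt: "fder n m q i F p = pd (XC i) F p +
   (\<Sum>k<q. \<Sum>\<sigma><m. \<Sum>js \<in> tuples k {..<n}. p (YC \<sigma> (mset (i # js))) *
      ((\<Prod>l<n. fact (count (mset js) l)) / fact (length js)) * pd (YC \<sigma> (mset js)) F p)"
  by (simp add: fder_def wpd_def mult.assoc)

lemma fder_gen:
  assumes "finite S" "\<And>c. pd c H p = (\<Sum>x\<in>S. a x * pd c (F x) p)"
  shows "fder n m q i H p = (\<Sum>x\<in>S. a x * fder n m q i (F x) p)"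
proof -
  have "fder n m q i H p = (\<Sum>x\<in>S. a x * pd (XC i) (F x) p) +
   (\<Sum>k<q. \<Sum>\<sigma><m. \<Sum>js \<in> tuples k {..<n}. \<Sum>x\<in>S. a x * (p (YC \<sigma> (mset (i # js))) *
      ((\<Prod>l<n. fact (count (mset js) l)) / fact (length js)) * pd (YC \<sigma> (mset js)) (F x) p))"
    unfolding fder_alt assms(2) by (simp add: sum_distrib_left sum_divide_distrib mult_ac)
  also have "\<dots> = (\<Sum>x\<in>S. a x * pd (XC i) (F x) p) +
   (\<Sum>x\<in>S. a x * (\<Sum>k<q. \<Sum>\<sigma><m. \<Sum>js \<in> tuples k {..<n}. (p (YC \<sigma> (mset (i # js))) *
      ((\<Prod>l<n. fact (count (mset js) l)) / fact (length js)) * pd (YC \<sigma> (mset js)) (F x) p)))"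
    by (simp add: sum_distrib_left sum.swap[of _ S])
  also have "\<dots> = (\<Sum>x\<in>S. a x * fder n m q i (F x) p)"
    unfolding fder_alt by (simp add: sum.distrib distrib_left)
  finally show ?thesis .
qed

lemma fder_add: "ldiff F p \<Longrightarrow> ldiff G p \<Longrightarrow>
  fder n m q i (\<lambda>x. F x + G x) p = fder n m q i F p + fder n m q i G p"
  using fder_gen[of "{True,False}" "\<lambda>x. F x + G x" p "\<lambda>_. 1" "\<lambda>b. if b then F else G"]
  by (simp add: pd_add)

lemma fder_mult: "ldiff F p \<Longrightarrow> ldiff G p \<Longrightarrow>
  fder n m q i (\<lambda>x. F x * G x) p = fder n m q i F p * G p + F p * fder n m q i G p"
  using fder_gen[of "{True,False}" "\<lambda>x. F x * G x" p "\<lambda>b. if b then G p else F p" "\<lambda>b. if b then F else G"]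
  by (simp add: pd_mult mult_ac)

lemma fder_const: "fder n m q i (\<lambda>x. k) p = 0"
  using fder_gen[of "{}" "\<lambda>x. k" p] by (simp add: pd_const)

lemma fder_sum: "finite S \<Longrightarrow> (\<And>x. x \<in> S \<Longrightarrow> ldiff (F x) p) \<Longrightarrow>
  fder n m q i (\<lambda>y. \<Sum>x\<in>S. F x y) p = (\<Sum>x\<in>S. fder n m q i (F x) p)"
  using fder_gen[of S "\<lambda>y. \<Sum>x\<in>S. F x y" p "\<lambda>_. 1" F] by (simp add: pd_sum)

lemma fder_prod: "finite S \<Longrightarrow> (\<And>x. x \<in> S \<Longrightarrow> ldiff (F x) p) \<Longrightarrow>
  fder n m q i (\<lambda>y. \<Prod>x\<in>S. F x y) p = (\<Sum>x\<in>S. fder n m q i (F x) p * (\<Prod>j\<in>S-{x}. F j p))"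
  using fder_gen[of S "\<lambda>y. \<Prod>x\<in>S. F x y" p "\<lambda>x. \<Prod>j\<in>S-{x}. F j p" F] by (simp add: pd_prod mult_ac)


definition smk :: "jpoint set \<Rightarrow> nat \<Rightarrow> (jpoint \<Rightarrow> real) \<Rightarrow> bool" where
  "smk V k F \<longleftrightarrow> (\<forall>cs. length cs \<le> k \<longrightarrow> continuous_on V (pds cs F) \<and> (\<forall>p\<in>V. ldiff (pds cs F) p))"

lemma smooth_on_smk: "smooth_on V F \<longleftrightarrow> (\<forall>k. smk V k F)"
  unfolding smooth_on_def smk_def ldiff_def line_def by (meson order_refl)

lemma pds_eqon: "open V \<Longrightarrow> eqon V F G \<Longrightarrow> eqon V (pds cs F) (pds cs G)"
  by (induction cs) (auto simp: eqon_def intro!: pd_local)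

lemma ldiff_local: "open V \<Longrightarrow> eqon V F G \<Longrightarrow> p \<in> V \<Longrightarrow> ldiff F p \<Longrightarrow> ldiff G p"
  unfolding ldiff_def using diff_local by blast

lemma smk_cong: "open V \<Longrightarrow> eqon V F G \<Longrightarrow> smk V k F \<Longrightarrow> smk V k G"
  unfolding smk_def
proof (intro allI impI conjI ballI)
  fix cs :: "jlabel list" assume o: "open V" and e: "eqon V F G"
    and h: "\<forall>cs. length cs \<le> k \<longrightarrow> continuous_on V (pds cs F) \<and> (\<forall>p\<in>V. ldiff (pds cs F) p)"
    and l: "length cs \<le> k"
  have e2: "eqon V (pds cs F) (pds cs G)" using pds_eqon[OF o e] .
  show "continuous_on V (pds cs G)"
    using h l e2 continuous_on_cong[of V V "pds cs F" "pds cs G"] by (auto simp: eqon_def)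
  fix p assume "p \<in> V"
  thus "ldiff (pds cs G) p" using h l e2 ldiff_local[OF o e2] by blast
qed

lemma smk_mono: "k' \<le> k \<Longrightarrow> smk V k F \<Longrightarrow> smk V k' F"
  unfolding smk_def by auto

lemma pds_snoc: "pds (cs @ [c]) F = pds cs (pd c F)"
  by (induction cs) auto

lemma smk_pd: "smk V (Suc k) F \<Longrightarrow> smk V k (pd c F)"
  unfolding smk_def
proof (intro allI impI)
  fix cs :: "jlabel list"
  assume h: "\<forall>cs. length cs \<le> Suc k \<longrightarrow> continuous_on V (pds cs F) \<and> (\<forall>p\<in>V. ldiff (pds cs F) p)"
    and l: "length cs \<le> k"
  show "continuous_on V (pds cs (pd c F)) \<and> (\<forall>p\<in>V. ldiff (pds cs (pd c F)) p)"
    using h[rule_format, of "cs @ [c]"] l by (simp add: pds_snoc)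
qed

lemma smk_D: "smk V k F \<Longrightarrow> length cs \<le> k \<Longrightarrow> p \<in> V \<Longrightarrow> ldiff (pds cs F) p"
  unfolding smk_def by blast

lemma smk_C: "smk V k F \<Longrightarrow> length cs \<le> k \<Longrightarrow> continuous_on V (pds cs F)"
  unfolding smk_def by blast

lemma smk_ldiff: "smk V k F \<Longrightarrow> p \<in> V \<Longrightarrow> ldiff F p"
  using smk_D[of V k F "[]"] by simp

lemma smk_cont: "smk V k F \<Longrightarrow> continuous_on V F"
  using smk_C[of V k F "[]"] by simp

lemma pds_add: "open V \<Longrightarrow> smk V k F \<Longrightarrow> smk V k G \<Longrightarrow> length cs \<le> k \<Longrightarrow>
   eqon V (pds cs (\<lambda>q. F q + G q)) (\<lambda>q. pds cs F q + pds cs G q)"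
proof (induction cs)
  case Nil
  then show ?case by (simp add: eqon_def)
next
  case (Cons c cs)
  show ?case unfolding eqon_def
  proof
    fix p assume p: "p \<in> V"
    have "pds (c # cs) (\<lambda>q. F q + G q) p = pd c (\<lambda>q. pds cs F q + pds cs G q) p"
      using Cons p by (simp add: pd_local)
    also have "\<dots> = pd c (pds cs F) p + pd c (pds cs G) p"
      using Cons p by (intro pd_add) (auto intro: smk_D)
    finally show "pds (c # cs) (\<lambda>q. F q + G q) p = pds (c # cs) F p + pds (c # cs) G p" by simp
  qed
qed

lemma smk_add: "open V \<Longrightarrow> smk V k F \<Longrightarrow> smk V k G \<Longrightarrow> smk V k (\<lambda>q. F q + G q)"
  unfolding smk_def[of V k "\<lambda>q. F q + G q"]
proof (intro allI impI conjI ballI)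
  fix cs :: "jlabel list"
  assume o: "open V" and f: "smk V k F" and g: "smk V k G" and l: "length cs \<le> k"
  have e: "eqon V (\<lambda>q. pds cs F q + pds cs G q) (pds cs (\<lambda>q. F q + G q))"
    using pds_add[OF o f g l] by (simp add: eqon_def)
  have "continuous_on V (\<lambda>q. pds cs F q + pds cs G q)"
    using f g l by (intro continuous_on_add) (auto intro: smk_C)
  thus "continuous_on V (pds cs (\<lambda>q. F q + G q))"
    using e continuous_on_cong[of V V] by (auto simp: eqon_def)
  fix p assume p: "p \<in> V"
  have "ldiff (\<lambda>q. pds cs F q + pds cs G q) p"
    using f g l p by (intro ldiff_add) (auto intro: smk_D)
  thus "ldiff (pds cs (\<lambda>q. F q + G q)) p" using ldiff_local[OF o e p] by blast
qed

lemma pds_const: "pds cs (\<lambda>q. k) = (\<lambda>q. if cs = [] then k else 0)"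
proof (induction cs)
  case Nil
  then show ?case by simp
next
  case (Cons c cs)
  show ?case by (simp only: pds.simps Cons.IH) (simp add: fun_eq_iff pd_const)
qed

lemma smk_const: "smk V k (\<lambda>q. a)"
  unfolding smk_def pds_const
proof (intro allI impI conjI ballI)
  fix cs :: "jlabel list" and p
  show "continuous_on V (\<lambda>q. if cs = [] then a else 0)" by (rule continuous_on_const)
  show "ldiff (\<lambda>q. if cs = [] then a else 0) p" by (rule ldiff_const)
qed

lemma pds_coord: "pds cs (\<lambda>q. q d) = (\<lambda>q. q d) \<or> (\<exists>a. pds cs (\<lambda>q. q d) = (\<lambda>q. a))"
proof (cases cs rule: rev_exhaust)
  case Nil thus ?thesis by simp
next
  case (snoc cs' c)
  have "pd c (\<lambda>q. q d) = (\<lambda>q. if c = d then 1 else 0)" by (simp add: fun_eq_iff pd_coord)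
  hence "pds cs (\<lambda>q. q d) = (\<lambda>q. if c = d \<and> cs' = [] then 1 else 0)"
    using snoc by (simp add: pds_snoc pds_const)
  thus ?thesis by (intro disjI2 exI)
qed

lemma smk_coord: "smk V k (\<lambda>q. q d)"
  unfolding smk_def
proof (intro allI impI conjI ballI)
  fix cs :: "jlabel list"
  have c: "continuous_on V (\<lambda>q::jpoint. q d)"
    by (rule continuous_on_subset[OF continuous_on_product_coordinates]) simp
  show "continuous_on V (pds cs (\<lambda>q. q d))"
  proof (cases "pds cs (\<lambda>q. q d) = (\<lambda>q. q d)")
    case True thus ?thesis using c by simp
  next
    case False
    have "\<exists>a. pds cs (\<lambda>q. q d) = (\<lambda>q. a)" using pds_coord[of cs d] False by (elim disjE) simp_all
    then obtain a where "pds cs (\<lambda>q. q d) = (\<lambda>q. a)" by (elim exE)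
    thus ?thesis by simp
  qed
  fix p
  show "ldiff (pds cs (\<lambda>q. q d)) p"
  proof (cases "pds cs (\<lambda>q. q d) = (\<lambda>q. q d)")
    case True thus ?thesis using ldiff_coord by simp
  next
    case False
    have "\<exists>a. pds cs (\<lambda>q. q d) = (\<lambda>q. a)" using pds_coord[of cs d] False by (elim disjE) simp_all
    then obtain a where "pds cs (\<lambda>q. q d) = (\<lambda>q. a)" by (elim exE)
    thus ?thesis using ldiff_const by simp
  qed
qed

lemma smk_mult: "open V \<Longrightarrow> smk V k F \<Longrightarrow> smk V k G \<Longrightarrow> smk V k (\<lambda>q. F q * G q)"
proof (induction k arbitrary: F G)
  case 0
  show ?case unfolding smk_def
  proof (intro allI impI conjI ballI)
    fix cs :: "jlabel list" assume "length cs \<le> 0"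
    hence cs: "cs = []" by simp
    show "continuous_on V (pds cs (\<lambda>q. F q * G q))"
      using cs continuous_on_mult[OF smk_cont[OF 0(2)] smk_cont[OF 0(3)]] by simp
    fix p assume "p \<in> V"
    thus "ldiff (pds cs (\<lambda>q. F q * G q)) p"
      using cs ldiff_mult[OF smk_ldiff[OF 0(2)] smk_ldiff[OF 0(3)]] by simp
  qed
next
  case (Suc k)
  note o = Suc.prems(1)
  show ?case unfolding smk_def
  proof (intro allI impI)
    fix cs :: "jlabel list" assume l: "length cs \<le> Suc k"
    show "continuous_on V (pds cs (\<lambda>q. F q * G q)) \<and> (\<forall>p\<in>V. ldiff (pds cs (\<lambda>q. F q * G q)) p)"
    proof (cases cs rule: rev_exhaust)
      case Nil
      thus ?thesis
        using continuous_on_mult[OF smk_cont[OF Suc.prems(2)] smk_cont[OF Suc.prems(3)]]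
          ldiff_mult[OF smk_ldiff[OF Suc.prems(2)] smk_ldiff[OF Suc.prems(3)]] by simp
    next
      case (snoc cs' c)
      have l': "length cs' \<le> k" using l snoc by simp
      define H where "H = (\<lambda>q. pd c F q * G q + F q * pd c G q)"
      have e1: "eqon V (pd c (\<lambda>q. F q * G q)) H"
        unfolding eqon_def H_def using Suc.prems by (auto intro!: pd_mult smk_ldiff)
      have sH: "smk V k H" unfolding H_def
        using Suc.prems smk_mono[of k "Suc k" V F] smk_mono[of k "Suc k" V G]
        by (intro smk_add Suc.IH smk_pd) auto
      have "smk V k (pd c (\<lambda>q. F q * G q))"
        using smk_cong[OF o _ sH] e1 by (auto simp: eqon_def)
      thus ?thesis using snoc l' by (auto simp: pds_snoc intro: smk_C smk_D)
    qed
  qed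
qed

lemma smk_sum: "finite S \<Longrightarrow> open V \<Longrightarrow> (\<And>x. x \<in> S \<Longrightarrow> smk V k (F x)) \<Longrightarrow> smk V k (\<lambda>q. \<Sum>x\<in>S. F x q)"
proof (induction S rule: finite_induct)
  case empty thus ?case using smk_const[of V k 0] by simp
next
  case (insert x S)
  thus ?case using smk_add[of V k "F x" "\<lambda>q. \<Sum>x\<in>S. F x q"] by simp
qed

lemma smk_prod: "finite S \<Longrightarrow> open V \<Longrightarrow> (\<And>x. x \<in> S \<Longrightarrow> smk V k (F x)) \<Longrightarrow> smk V k (\<lambda>q. \<Prod>x\<in>S. F x q)"
proof (induction S rule: finite_induct)
  case empty thus ?case using smk_const[of V k 1] by simp
next
  case (insert x S)
  thus ?case using smk_mult[of V k "F x" "\<lambda>q. \<Prod>x\<in>S. F x q"] by simp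
qed


definition ins :: "nat \<Rightarrow> 'a \<Rightarrow> 'a list \<Rightarrow> 'a list" where
  "ins k a ys = take k ys @ a # drop k ys"

lemma length_ins[simp]: "length (ins k a ys) = Suc (length ys)"
  by (simp add: ins_def)

lemma ins_nth_k[simp]: "k \<le> length ys \<Longrightarrow> ins k a ys ! k = a"
  by (simp add: ins_def nth_append)

lemma del_ins[simp]: "k \<le> length ys \<Longrightarrow> del_nth k (ins k a ys) = ys"
  by (simp add: ins_def del_nth_def)

lemma ins_del: "k < length xs \<Longrightarrow> ins k (xs ! k) (del_nth k xs) = xs"
  by (simp add: ins_def del_nth_def min_def id_take_nth_drop[symmetric])

lemma set_ins[simp]: "set (ins k a ys) = insert a (set ys)"
proof -
  have "set (take k ys) \<union> set (drop k ys) = set ys" by (metis append_take_drop_id set_append)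
  thus ?thesis by (auto simp: ins_def)
qed

lemma ins_0[simp]: "ins 0 a ys = a # ys" by (simp add: ins_def)

lemma ins_nth: "k \<le> length ys \<Longrightarrow> l < Suc (length ys) \<Longrightarrow>
   ins k a ys ! l = (if l < k then ys ! l else if l = k then a else ys ! (l - 1))"
  by (auto simp: ins_def nth_append min_def nth_Cons' )

lemma length_del_nth[simp]: "k < length xs \<Longrightarrow> length (del_nth k xs) = length xs - 1"
  by (simp add: del_nth_def)

lemma set_del_nth: "set (del_nth k xs) \<subseteq> set xs"
  by (auto simp: del_nth_def dest: in_set_takeD in_set_dropD)

lemma finite_tuples[simp]: "finite S \<Longrightarrow> finite (tuples k S)"
  unfolding tuples_def using finite_lists_length_eq[of S k] by (simp add: conj_commute)

lemma tuples_iff: "xs \<in> tuples k S \<longleftrightarrow> length xs = k \<and> set xs \<subseteq> S"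
  by (simp add: tuples_def)

lemma ins_tuples: "k \<le> s \<Longrightarrow> bij_betw (\<lambda>(a, ys). ins k a ys) (S \<times> tuples s S) (tuples (Suc s) S)"
proof (rule bij_betw_byWitness[where f' = "\<lambda>xs. (xs ! k, del_nth k xs)"])
  assume k: "k \<le> s"
  show "\<forall>x\<in>S \<times> tuples s S. (\<lambda>xs. (xs ! k, del_nth k xs)) ((\<lambda>(a, ys). ins k a ys) x) = x"
    using k by (auto simp: tuples_iff)
  show "\<forall>y\<in>tuples (Suc s) S. (\<lambda>(a, ys). ins k a ys) (y ! k, del_nth k y) = y"
    using k by (auto simp: tuples_iff ins_del)
  show "(\<lambda>(a, ys). ins k a ys) ` (S \<times> tuples s S) \<subseteq> tuples (Suc s) S"
    by (auto simp: tuples_iff)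
  show "(\<lambda>xs. (xs ! k, del_nth k xs)) ` tuples (Suc s) S \<subseteq> S \<times> tuples s S"
    using k set_del_nth by (fastforce simp: tuples_iff)
qed

lemma sum_tuples_Suc: "k \<le> s \<Longrightarrow>
  (\<Sum>xs\<in>tuples (Suc s) S. f xs) = (\<Sum>a\<in>S. \<Sum>ys\<in>tuples s S. f (ins k a ys))"
proof -
  assume k: "k \<le> s"
  have "(\<Sum>xs\<in>tuples (Suc s) S. f xs) = (\<Sum>x\<in>S \<times> tuples s S. f ((\<lambda>(a, ys). ins k a ys) x))"
    by (rule sum.reindex_bij_betw[OF ins_tuples[OF k], symmetric])
  also have "\<dots> = (\<Sum>a\<in>S. \<Sum>ys\<in>tuples s S. f (ins k a ys))"
    by (subst sum.cartesian_product) (auto intro!: sum.cong split: prod.splits)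
  finally show ?thesis .
qed

lemma sum_tuples_Suc0: "(\<Sum>xs\<in>tuples (Suc s) S. f xs) = (\<Sum>a\<in>S. \<Sum>ys\<in>tuples s S. f (a # ys))"
  using sum_tuples_Suc[where k=0 and s=s and S=S and f=f] by simp

lemma levi_swap:
  assumes ij: "i < length xs" "j < length xs" "i \<noteq> j"
  shows "levi n (xs[i := xs ! j, j := xs ! i]) = - levi n xs"
proof (cases "length xs = n \<and> set xs = {..<n}")
  case False
  have "set (xs[i := xs ! j, j := xs ! i]) = set xs"
    using ij by (metis length_list_update nth_list_update_eq set_swap)
  thus ?thesis using False by (auto simp: levi_def)
next
  case True
  define f where "f = (\<lambda>l. if l < n then xs ! l else l)"
  have sw: "set (xs[i := xs ! j, j := xs ! i]) = set xs"
    using ij by (metis length_list_update nth_list_update_eq set_swap)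
  have fi: "(\<lambda>l. if l < n then xs[i := xs ! j, j := xs ! i] ! l else l) = f \<circ> Transposition.transpose i j"
  proof
    fix l
    show "(if l < n then xs[i := xs ! j, j := xs ! i] ! l else l) = (f \<circ> Transposition.transpose i j) l"
      using ij True by (auto simp: f_def nth_list_update Transposition.transpose_def)
  qed
  have img: "f ` {..<n} = {..<n}"
  proof -
    have "f ` {..<n} = (\<lambda>l. xs ! l) ` {..<n}" by (auto simp: f_def)
    also have "\<dots> = set xs" using True by (auto simp: set_conv_nth)
    finally show ?thesis using True by simp
  qed
  hence "inj_on f {..<n}" by (intro eq_card_imp_inj_on) auto
  hence "bij_betw f {..<n} {..<n}" using img by (simp add: bij_betw_def)
  hence "f permutes {..<n}" by (rule bij_imp_permutes) (auto simp: f_def)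
  hence pf: "permutation f" by (rule permutes_imp_permutation[rotated]) simp
  have "sign (f \<circ> Transposition.transpose i j) = sign f * sign (Transposition.transpose i j)"
    by (rule sign_compose[OF pf permutation_swap_id])
  also have "\<dots> = - sign f" using ij by (simp add: sign_swap_id)
  finally show ?thesis using True sw fi by (simp add: levi_def f_def)
qed

lemma levi_adj: "levi n (P @ u # v # R) = - levi n (P @ v # u # R)"
proof -
  let ?xs = "P @ v # u # R"
  have "?xs[length P := ?xs ! Suc (length P), Suc (length P) := ?xs ! length P] = P @ u # v # R"
    by (simp add: nth_append list_update_append)
  thus ?thesis using levi_swap[of "length P" ?xs "Suc (length P)" n] by simp
qed

lemma levi_move: "levi n (P @ us @ v # ws) = (-1) ^ length us * levi n (P @ v # us @ ws)"
proof (induction us arbitrary: P)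
  case Nil
  then show ?case by simp
next
  case (Cons u us)
  have "levi n (P @ (u # us) @ v # ws) = levi n ((P @ [u]) @ us @ v # ws)" by simp
  also have "\<dots> = (-1) ^ length us * levi n ((P @ [u]) @ v # us @ ws)" by (rule Cons.IH)
  also have "levi n ((P @ [u]) @ v # us @ ws) = levi n (P @ u # v # us @ ws)" by simp
  also have "\<dots> = - levi n (P @ v # u # us @ ws)" by (rule levi_adj)
  finally show ?case by simp
qed


lemma prod_ins_aux: "k \<le> s \<Longrightarrow>
  (\<Prod>l<Suc s. if l < k then f l else if l = k then c else f (l - 1)) = (c::real) * (\<Prod>l<s. f l)"
proof (induction s)
  case 0
  then show ?case by simp
next
  case (Suc s)
  show ?case
  proof (cases "k \<le> s")
    case True
    have "(\<Prod>l<Suc (Suc s). if l < k then f l else if l = k then c else f (l - 1)) =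
          (\<Prod>l<Suc s. if l < k then f l else if l = k then c else f (l - 1)) * f s"
      using True by (simp add: prod.lessThan_Suc)
    also have "\<dots> = c * (\<Prod>l<Suc s. f l)" using Suc.IH[OF True] by (simp add: prod.lessThan_Suc)
    finally show ?thesis .
  next
    case False
    hence k: "k = Suc s" using Suc.prems by simp
    have "(\<Prod>l<Suc s. if l < k then f l else if l = k then c else f (l - 1)) = (\<Prod>l<Suc s. f l)"
      using k by (intro prod.cong) auto
    thus ?thesis using k by (simp add: prod.lessThan_Suc[of _ "Suc s"] mult.commute)
  qed
qed

lemma prod_ins: "k \<le> s \<Longrightarrow> length xs = s \<Longrightarrow> length ys = s \<Longrightarrow> length zs = s \<Longrightarrow>
  (\<Prod>l<Suc s. g (ins k a xs ! l) (ins k b ys ! l) (ins k c zs ! l)) =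
  (g a b c :: real) * (\<Prod>l<s. g (xs ! l) (ys ! l) (zs ! l))"
proof -
  assume h: "k \<le> s" "length xs = s" "length ys = s" "length zs = s"
  have "(\<Prod>l<Suc s. g (ins k a xs ! l) (ins k b ys ! l) (ins k c zs ! l)) =
    (\<Prod>l<Suc s. if l < k then g (xs ! l) (ys ! l) (zs ! l) else if l = k then g a b c
        else g (xs ! (l - 1)) (ys ! (l - 1)) (zs ! (l - 1)))"
    using h by (intro prod.cong refl) (simp add: ins_nth)
  also have "\<dots> = g a b c * (\<Prod>l<s. g (xs ! l) (ys ! l) (zs ! l))"
    by (rule prod_ins_aux[OF h(1)])
  finally show ?thesis .
qed

lemma hyperjac_cons:
  assumes "length \<sigma>s = length Is"
  shows "hyperjac n (I # Is) (\<sigma> # \<sigma>s) is p = (-1) ^ length Is *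
     (\<Sum>j<n. p (YC \<sigma> (mset (I @ [j]))) * hyperjac n Is \<sigma>s (j # is) p)"
proof -
  let ?s = "length Is"
  have "hyperjac n (I # Is) (\<sigma> # \<sigma>s) is p =
     (\<Sum>j<n. \<Sum>js\<in>tuples ?s {..<n}. levi n ((j # js) @ is) *
        (\<Prod>l<Suc ?s. p (YC ((\<sigma> # \<sigma>s) ! l) (mset (((I # Is) ! l) @ [(j # js) ! l])))))"
    unfolding hyperjac_def by (simp add: sum_tuples_Suc0)
  also have "\<dots> = (\<Sum>j<n. \<Sum>js\<in>tuples ?s {..<n}. (-1) ^ ?s * (p (YC \<sigma> (mset (I @ [j]))) *
        (levi n (js @ j # is) * (\<Prod>l<?s. p (YC (\<sigma>s ! l) (mset ((Is ! l) @ [js ! l])))))))"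
  proof (intro sum.cong refl)
    fix j js assume "js \<in> tuples ?s {..<n}"
    hence len: "length js = ?s" by (simp add: tuples_iff)
    have "levi n ([] @ js @ j # is) = (-1) ^ length js * levi n ([] @ j # js @ is)" by (rule levi_move)
    hence "levi n (j # js @ is) = (-1) ^ ?s * levi n (js @ j # is)"
      using len by (simp add: power_mult_distrib[symmetric] flip: power_add mult_2)
    thus "levi n ((j # js) @ is) * (\<Prod>l<Suc ?s. p (YC ((\<sigma> # \<sigma>s) ! l) (mset (((I # Is) ! l) @ [(j # js) ! l])))) =
      (-1) ^ ?s * (p (YC \<sigma> (mset (I @ [j]))) * (levi n (js @ j # is) * (\<Prod>l<?s. p (YC (\<sigma>s ! l) (mset ((Is ! l) @ [js ! l]))))))"
      by (simp add: prod.lessThan_Suc_shift mult_ac del: prod.lessThan_Suc)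
  qed
  also have "\<dots> = (-1) ^ ?s * (\<Sum>j<n. p (YC \<sigma> (mset (I @ [j]))) * hyperjac n Is \<sigma>s (j # is) p)"
    unfolding hyperjac_def by (simp add: sum_distrib_left)
  finally show ?thesis .
qed

lemma hyperjac_move:
  assumes "length \<sigma>s = length Is" "k \<le> length Is"
  shows "hyperjac n (ins k I Is) (ins k \<sigma> \<sigma>s) is p = (-1) ^ k * hyperjac n (I # Is) (\<sigma> # \<sigma>s) is p"
proof -
  let ?s = "length Is"
  have "hyperjac n (ins k I Is) (ins k \<sigma> \<sigma>s) is p =
     (\<Sum>j<n. \<Sum>js\<in>tuples ?s {..<n}. levi n (ins k j js @ is) *
        (\<Prod>l<Suc ?s. p (YC (ins k \<sigma> \<sigma>s ! l) (mset ((ins k I Is ! l) @ [ins k j js ! l])))))"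
    unfolding hyperjac_def using assms by (simp add: sum_tuples_Suc[where k=k])
  also have "\<dots> = (\<Sum>j<n. \<Sum>js\<in>tuples ?s {..<n}. (-1) ^ k * (levi n ((j # js) @ is) *
        (\<Prod>l<Suc ?s. p (YC ((\<sigma> # \<sigma>s) ! l) (mset (((I # Is) ! l) @ [(j # js) ! l]))))))"
  proof (intro sum.cong refl)
    fix j js assume "js \<in> tuples ?s {..<n}"
    hence len: "length js = ?s" by (simp add: tuples_iff)
    have e1: "ins k j js @ is = take k js @ j # (drop k js @ is)" by (simp add: ins_def)
    have e2: "take k js @ drop k js @ is = js @ is" by (simp flip: append_assoc)
    have e3: "length (take k js) = k" using len assms by simp
    have lv: "levi n (ins k j js @ is) = (-1) ^ k * levi n ((j # js) @ is)"
      unfolding e1 using levi_move[of n "[]" "take k js" j "drop k js @ is"] e2 e3 by simp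
    have pr: "(\<Prod>l<Suc ?s. p (YC (ins k \<sigma> \<sigma>s ! l) (mset ((ins k I Is ! l) @ [ins k j js ! l])))) =
        p (YC \<sigma> (mset (I @ [j]))) * (\<Prod>l<?s. p (YC (\<sigma>s ! l) (mset ((Is ! l) @ [js ! l]))))"
      using prod_ins[of k ?s \<sigma>s Is js "\<lambda>a b c. p (YC a (mset (b @ [c])))" \<sigma> I j] len assms by simp
    have pr2: "(\<Prod>l<Suc ?s. p (YC ((\<sigma> # \<sigma>s) ! l) (mset (((I # Is) ! l) @ [(j # js) ! l])))) =
        p (YC \<sigma> (mset (I @ [j]))) * (\<Prod>l<?s. p (YC (\<sigma>s ! l) (mset ((Is ! l) @ [js ! l]))))"
      by (simp add: prod.lessThan_Suc_shift del: prod.lessThan_Suc)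
    show "levi n (ins k j js @ is) * (\<Prod>l<Suc ?s. p (YC (ins k \<sigma> \<sigma>s ! l) (mset ((ins k I Is ! l) @ [ins k j js ! l])))) =
      (-1) ^ k * (levi n ((j # js) @ is) * (\<Prod>l<Suc ?s. p (YC ((\<sigma> # \<sigma>s) ! l) (mset (((I # Is) ! l) @ [(j # js) ! l])))))"
      unfolding lv pr pr2 by simp
  qed
  also have "\<dots> = (-1) ^ k * hyperjac n (I # Is) (\<sigma> # \<sigma>s) is p"
    unfolding hyperjac_def by (simp add: sum_tuples_Suc0 sum_distrib_left)
  finally show ?thesis .
qed


lemma prod_fact_mset: "set_mset M \<subseteq> {..<(n::nat)} \<Longrightarrow>
  (\<Prod>l<n. fact (count M l)) = (\<Prod>x\<in>set_mset M. fact (count M x) :: nat)"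
  by (rule prod.mono_neutral_right) (auto simp: not_in_iff)

lemma card_perm_weight:
  assumes "set_mset M \<subseteq> {..<(n::nat)}"
  shows "real (card (permutations_of_multiset M)) * ((\<Prod>l<n. fact (count M l)) / fact (size M)) = 1"
proof -
  have "card (permutations_of_multiset M) * (\<Prod>l<n. fact (count M l)) = (fact (size M) :: nat)"
    using card_permutations_of_multiset_aux[of M] prod_fact_mset[OF assms] by simp
  hence "real (card (permutations_of_multiset M) * (\<Prod>l<n. fact (count M l))) = real (fact (size M))"
    by (rule arg_cong)
  hence e: "real (card (permutations_of_multiset M)) * (\<Prod>l<n. fact (count M l)) = (fact (size M) :: real)"
    by (simp only: of_nat_mult of_nat_prod of_nat_fact)
  have nz: "fact (size M) \<noteq> (0::real)" by simp
  have "real (card (permutations_of_multiset M)) * ((\<Prod>l<n. fact (count M l)) / fact (size M)) =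
        (real (card (permutations_of_multiset M)) * (\<Prod>l<n. fact (count M l))) / fact (size M)"
    by (simp only: times_divide_eq_right)
  also have "\<dots> = 1" unfolding e using nz by simp
  finally show ?thesis .
qed

lemma tuples_mset: "set_mset M \<subseteq> {..<(n::nat)} \<Longrightarrow>
  {js \<in> tuples k {..<n}. mset js = M} = (if k = size M then permutations_of_multiset M else {})"
  by (auto simp: tuples_iff permutations_of_multiset_def)

lemma fder_coord:
  assumes "\<sigma> < m" "set_mset M \<subseteq> {..<n}" "size M < q"
  shows "fder n m q j (\<lambda>x. x (YC \<sigma> M)) p = p (YC \<sigma> (add_mset j M))"
proof -
  define C where "C = p (YC \<sigma> (add_mset j M)) * ((\<Prod>l<n. fact (count M l)) / fact (size M))"
  have step: "(\<Sum>\<sigma>'<m. \<Sum>js \<in> tuples k {..<n}. p (YC \<sigma>' (mset (j # js))) * wpd n \<sigma>' js (\<lambda>x. x (YC \<sigma> M)) p)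
      = (if k = size M then real (card (permutations_of_multiset M)) * C else 0)" for k
  proof -
    have "(\<Sum>\<sigma>'<m. \<Sum>js \<in> tuples k {..<n}. p (YC \<sigma>' (mset (j # js))) * wpd n \<sigma>' js (\<lambda>x. x (YC \<sigma> M)) p)
        = (\<Sum>\<sigma>'<m. \<Sum>js \<in> tuples k {..<n}. if \<sigma>' = \<sigma> then (if mset js = M then C else 0) else 0)"
      by (intro sum.cong refl) (auto simp: wpd_def pd_coord C_def)
    also have "\<dots> = (\<Sum>js \<in> tuples k {..<n}. if mset js = M then C else 0)"
      using assms(1) by (subst sum.swap) (intro sum.cong refl, simp only: sum.delta[OF finite_lessThan], simp)
    also have "\<dots> = (\<Sum>js \<in> {js \<in> tuples k {..<n}. mset js = M}. C)"
      using sum.inter_filter[of "tuples k {..<n}" "\<lambda>_. C" "\<lambda>js. mset js = M"] by simp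
    also have "\<dots> = (if k = size M then real (card (permutations_of_multiset M)) * C else 0)"
      using assms(2) by (simp add: tuples_mset)
    finally show ?thesis .
  qed
  have "fder n m q j (\<lambda>x. x (YC \<sigma> M)) p = (\<Sum>k<q. if k = size M then real (card (permutations_of_multiset M)) * C else 0)"
    unfolding fder_def step by (simp add: pd_coord)
  also have "\<dots> = real (card (permutations_of_multiset M)) * C"
    using assms(3) by simp
  also have "\<dots> = p (YC \<sigma> (add_mset j M))"
    using card_perm_weight[OF assms(2)] unfolding C_def by (simp add: mult_ac)
  finally show ?thesis .
qed

lemma sum_invol_zero:
  assumes "\<And>x. x \<in> A \<Longrightarrow> f x \<in> A" "\<And>x. x \<in> A \<Longrightarrow> f (f x) = x" "\<And>x. x \<in> A \<Longrightarrow> G (f x) = - G x"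
  shows "sum G A = (0::real)"
proof -
  have "bij_betw f A A" by (rule bij_betw_byWitness[where f' = f]) (use assms in auto)
  hence "sum G A = sum (G \<circ> f) A" by (simp add: sum.reindex_bij_betw)
  also have "\<dots> = - sum G A" using assms(3) by (simp add: sum_negf)
  finally show ?thesis by simp
qed


lemma fder_cmult: "ldiff F p \<Longrightarrow> fder n m q i (\<lambda>x. c * F x) p = c * fder n m q i F p"
  using fder_mult[OF ldiff_const[of c p], of F n m q i] by (simp add: fder_const)

lemma hj_divfree:
  assumes Is: "Is \<in> tuples s (tuples (r - 1) {..<n})" and \<sigma>s: "\<sigma>s \<in> tuples s {..<m}" and r: "r \<ge> 1"
  shows "(\<Sum>j<n. fder n m (Suc r) j (hyperjac n Is \<sigma>s (j # is)) p) = 0"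
proof -
  define Y where "Y l a = (\<lambda>q::jpoint. q (YC (\<sigma>s ! l) (mset (Is ! l @ [a]))))" for l a
  define Z where "Z l a b = p (YC (\<sigma>s ! l) (add_mset b (mset (Is ! l @ [a]))))" for l a b
  define R where "R l js = (\<Prod>l'\<in>{..<s}-{l}. Y l' (js ! l') p)" for l js
  have lenIs: "length Is = s" using Is by (simp add: tuples_iff)
  have hj: "hyperjac n Is \<sigma>s (j # is) = (\<lambda>q. \<Sum>js\<in>tuples s {..<n}. levi n (js @ j # is) * (\<Prod>l<s. Y l (js ! l) q))" for j
    by (rule ext) (simp add: hyperjac_def lenIs Y_def)
  have fY: "fder n m (Suc r) j (Y l a) p = Z l a j" if "l < s" "a < n" for l a j
  proof -
    have "\<sigma>s ! l \<in> set \<sigma>s" using \<sigma>s that by (intro nth_mem) (simp add: tuples_iff)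
    hence "\<sigma>s ! l < m" using \<sigma>s by (auto simp: tuples_iff)
    moreover have "Is ! l \<in> set Is" using Is that by (intro nth_mem) (simp add: tuples_iff)
    hence "Is ! l \<in> tuples (r - 1) {..<n}" using Is unfolding tuples_iff[of Is] by blast
    ultimately show ?thesis unfolding Y_def Z_def using that r
      by (subst fder_coord) (auto simp: tuples_iff)
  qed
  have ldY: "ldiff (Y l a) q" for l a q unfolding Y_def by (rule ldiff_coord)
  have fj: "fder n m (Suc r) j (hyperjac n Is \<sigma>s (j # is)) p =
     (\<Sum>js\<in>tuples s {..<n}. levi n (js @ j # is) * (\<Sum>l<s. Z l (js ! l) j * R l js))" if j: "j < n" for j
  proof -
    have "fder n m (Suc r) j (hyperjac n Is \<sigma>s (j # is)) p =
       (\<Sum>js\<in>tuples s {..<n}. fder n m (Suc r) j (\<lambda>q. levi n (js @ j # is) * (\<Prod>l<s. Y l (js ! l) q)) p)"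
      unfolding hj by (rule fder_sum) (auto intro!: ldiff_mult ldiff_const ldiff_prod ldY)
    also have "\<dots> = (\<Sum>js\<in>tuples s {..<n}. levi n (js @ j # is) * (\<Sum>l<s. Z l (js ! l) j * R l js))"
    proof (intro sum.cong refl)
      fix js assume js: "js \<in> tuples s {..<n}"
      have "fder n m (Suc r) j (\<lambda>q. levi n (js @ j # is) * (\<Prod>l<s. Y l (js ! l) q)) p =
            levi n (js @ j # is) * fder n m (Suc r) j (\<lambda>q. \<Prod>l<s. Y l (js ! l) q) p"
        by (rule fder_cmult) (auto intro!: ldiff_prod ldY)
      also have "fder n m (Suc r) j (\<lambda>q. \<Prod>l<s. Y l (js ! l) q) p =
          (\<Sum>l<s. fder n m (Suc r) j (Y l (js ! l)) p * (\<Prod>l'\<in>{..<s}-{l}. Y l' (js ! l') p))"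
        by (rule fder_prod) (auto intro!: ldY)
      also have "\<dots> = (\<Sum>l<s. Z l (js ! l) j * R l js)"
      proof (intro sum.cong refl)
        fix l assume l: "l \<in> {..<s}"
        have "js ! l \<in> set js" using js l by (intro nth_mem) (simp add: tuples_iff)
        hence "js ! l < n" using js by (auto simp: tuples_iff)
        thus "fder n m (Suc r) j (Y l (js ! l)) p * (\<Prod>l'\<in>{..<s}-{l}. Y l' (js ! l') p) = Z l (js ! l) j * R l js"
          using fY[of l "js ! l" j] l unfolding R_def by simp
      qed
      finally show "fder n m (Suc r) j (\<lambda>q. levi n (js @ j # is) * (\<Prod>l<s. Y l (js ! l) q)) p =
          levi n (js @ j # is) * (\<Sum>l<s. Z l (js ! l) j * R l js)" .
    qed
    finally show ?thesis .
  qed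
  define G where "G l x = levi n (snd x @ fst x # is) * (Z l (snd x ! l) (fst x) * R l (snd x))" for l x
  have "(\<Sum>j<n. fder n m (Suc r) j (hyperjac n Is \<sigma>s (j # is)) p) =
        (\<Sum>j<n. \<Sum>js\<in>tuples s {..<n}. \<Sum>l<s. G l (j, js))"
    by (intro sum.cong refl) (simp add: fj G_def sum_distrib_left)
  also have "\<dots> = (\<Sum>j<n. \<Sum>l<s. \<Sum>js\<in>tuples s {..<n}. G l (j, js))"
    by (intro sum.cong refl) (rule sum.swap)
  also have "\<dots> = (\<Sum>l<s. \<Sum>j<n. \<Sum>js\<in>tuples s {..<n}. G l (j, js))"
    by (rule sum.swap)
  also have "\<dots> = (\<Sum>l<s. \<Sum>x\<in>{..<n} \<times> tuples s {..<n}. G l x)"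
    by (simp add: sum.cartesian_product)
  also have "\<dots> = 0"
  proof (rule sum.neutral, rule ballI)
    fix l assume l: "l \<in> {..<s}"
    define f where "f x = ((snd x) ! l, (snd x)[l := fst x])" for x :: "nat \<times> nat list"
    show "(\<Sum>x\<in>{..<n} \<times> tuples s {..<n}. G l x) = 0"
    proof (rule sum_invol_zero[where f = f])
      fix x assume x: "x \<in> {..<n} \<times> tuples s {..<n}"
      obtain j js where xe: "x = (j, js)" by force
      have j: "j < n" and js: "length js = s" "set js \<subseteq> {..<n}" using x xe by (auto simp: tuples_iff)
      have ll: "l < length js" using l js by simp
      have "js ! l \<in> set js" using ll by (rule nth_mem)
      hence "js ! l < n" using js by auto
      thus "f x \<in> {..<n} \<times> tuples s {..<n}"
        using ll js j xe by (auto simp: f_def tuples_iff dest!: set_update_subset_insert[THEN subsetD])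
    next
      fix x assume x: "x \<in> {..<n} \<times> tuples s {..<n}"
      obtain j js where xe: "x = (j, js)" by force
      have js: "length js = s" using x xe by (auto simp: tuples_iff)
      have ll: "l < length js" using l js by simp
      show "f (f x) = x" using ll xe by (simp add: f_def)
    next
      fix x assume x: "x \<in> {..<n} \<times> tuples s {..<n}"
      obtain j js where xe: "x = (j, js)" by force
      have js: "length js = s" using x xe by (auto simp: tuples_iff)
      have ll: "l < length js" using l js by simp
      have lv: "levi n (js[l := j] @ (js ! l) # is) = - levi n (js @ j # is)"
      proof -
        let ?xs = "js @ j # is"
        have "?xs[l := ?xs ! s, s := ?xs ! l] = js[l := j] @ (js ! l) # is"
          using ll js by (simp add: nth_append list_update_append)
        thus ?thesis using levi_swap[of l ?xs s n] ll js by simp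
      qed
      have Zs: "Z l j (js ! l) = Z l (js ! l) j" by (simp add: Z_def add_mset_commute)
      have Rs: "R l (js[l := j]) = R l js" unfolding R_def by (intro prod.cong refl) auto
      have "G l (f (j, js)) = - G l (j, js)" unfolding G_def f_def using ll by (simp add: lv Zs Rs)
      thus "G l (f x) = - G l x" unfolding xe .
    qed
  qed
  finally show ?thesis .
qed


lemma pd_indep:
  assumes "\<forall>p q. (\<forall>c\<in>jcoords n m k. p c = q c) \<longrightarrow> F p = F q" "c \<notin> jcoords n m k"
  shows "pd c F p = 0"
proof -
  have "(\<lambda>t. F (p(c := p c + t))) = (\<lambda>t. F p)"
  proof
    fix t
    show "F (p(c := p c + t)) = F p" using assms by (intro assms(1)[rule_format]) auto
  qed
  thus ?thesis unfolding pd_def by simp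
qed

lemma fder_Suc: "fder n m (Suc q) i F p = fder n m q i F p +
   (\<Sum>\<sigma><m. \<Sum>js \<in> tuples q {..<n}. p (YC \<sigma> (mset (i # js))) * wpd n \<sigma> js F p)"
  by (simp add: fder_def)

lemma fder_drop:
  assumes "\<forall>p q. (\<forall>c\<in>jcoords n m k. p c = q c) \<longrightarrow> F p = F q" "k < q"
  shows "fder n m (Suc q) i F p = fder n m q i F p"
proof -
  have "wpd n \<sigma> js F p = 0" if "js \<in> tuples q {..<n}" for \<sigma> js
  proof -
    have "YC \<sigma> (mset js) \<notin> jcoords n m k" using that assms(2) by (auto simp: jcoords_def tuples_iff)
    thus ?thesis unfolding wpd_def using pd_indep[OF assms(1)] by simp
  qed
  thus ?thesis unfolding fder_Suc by simp
qed

lemma hyperjac_ins_is: "k \<le> length is \<Longrightarrow>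
   hyperjac n Is \<sigma>s (ins k j is) p = (-1) ^ k * hyperjac n Is \<sigma>s (j # is) p"
proof -
  assume k: "k \<le> length is"
  have "levi n (js @ ins k j is) = (-1) ^ k * levi n (js @ j # is)" for js
  proof -
    have e1: "js @ ins k j is = js @ take k is @ j # drop k is" by (simp add: ins_def)
    have e2: "js @ j # take k is @ drop k is = js @ j # is" by simp
    show ?thesis unfolding e1 using levi_move[of n js "take k is" j "drop k is"] k e2
      by (simp add: min_def del: append_take_drop_id)
  qed
  thus ?thesis unfolding hyperjac_def by (simp add: sum_distrib_left mult.assoc)
qed

lemma swap_out3: "(\<Sum>a\<in>A. \<Sum>b\<in>B. \<Sum>c\<in>C. \<Sum>k\<in>K. g a b c k) = (\<Sum>k\<in>K. \<Sum>a\<in>A. \<Sum>b\<in>B. \<Sum>c\<in>C. g a b c k)"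
proof -
  have "(\<Sum>a\<in>A. \<Sum>b\<in>B. \<Sum>c\<in>C. \<Sum>k\<in>K. g a b c k) = (\<Sum>a\<in>A. \<Sum>b\<in>B. \<Sum>k\<in>K. \<Sum>c\<in>C. g a b c k)"
    by (intro sum.cong refl) (rule sum.swap)
  also have "\<dots> = (\<Sum>a\<in>A. \<Sum>k\<in>K. \<Sum>b\<in>B. \<Sum>c\<in>C. g a b c k)"
    by (intro sum.cong refl) (rule sum.swap)
  also have "\<dots> = (\<Sum>k\<in>K. \<Sum>a\<in>A. \<Sum>b\<in>B. \<Sum>c\<in>C. g a b c k)"
    by (rule sum.swap)
  finally show ?thesis .
qed

lemma swap_out2: "(\<Sum>a\<in>A. \<Sum>b\<in>B. \<Sum>k\<in>K. g a b k) = (\<Sum>k\<in>K. \<Sum>a\<in>A. \<Sum>b\<in>B. g a b k)"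
proof -
  have "(\<Sum>a\<in>A. \<Sum>b\<in>B. \<Sum>k\<in>K. g a b k) = (\<Sum>a\<in>A. \<Sum>k\<in>K. \<Sum>b\<in>B. g a b k)"
    by (intro sum.cong refl) (rule sum.swap)
  also have "\<dots> = (\<Sum>k\<in>K. \<Sum>a\<in>A. \<Sum>b\<in>B. g a b k)"
    by (rule sum.swap)
  finally show ?thesis .
qed

lemma part2_inner:
  fixes D :: "nat \<Rightarrow> nat list \<Rightarrow> real" and H :: "nat list \<Rightarrow> real"
  assumes H: "\<And>k j is. k \<le> t \<Longrightarrow> length is = t \<Longrightarrow> H (ins k j is) = (-1) ^ k * H (j # is)"
  shows "(\<Sum>is\<in>tuples (Suc t) {..<n}. (\<Sum>k<Suc t. (-1) ^ (s + k) * D (is ! k) (del_nth k is)) * H is)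
     = real (Suc t) * ((-1) ^ s * (\<Sum>is\<in>tuples t {..<n}. \<Sum>j<n. D j is * H (j # is)))"
proof -
  have "(\<Sum>is\<in>tuples (Suc t) {..<n}. (\<Sum>k<Suc t. (-1) ^ (s + k) * D (is ! k) (del_nth k is)) * H is)
     = (\<Sum>k<Suc t. \<Sum>is\<in>tuples (Suc t) {..<n}. (-1) ^ (s + k) * D (is ! k) (del_nth k is) * H is)"
    by (simp only: sum_distrib_right) (rule sum.swap)
  also have "\<dots> = (\<Sum>k<Suc t. (-1) ^ s * (\<Sum>is\<in>tuples t {..<n}. \<Sum>j<n. D j is * H (j # is)))"
  proof (intro sum.cong refl)
    fix k assume "k \<in> {..<Suc t}"
    hence k: "k \<le> t" by simp
    have "(\<Sum>is\<in>tuples (Suc t) {..<n}. (-1) ^ (s + k) * D (is ! k) (del_nth k is) * H is)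
       = (\<Sum>j<n. \<Sum>is\<in>tuples t {..<n}. (-1) ^ (s + k) * D (ins k j is ! k) (del_nth k (ins k j is)) * H (ins k j is))"
      by (rule sum_tuples_Suc[OF k])
    also have "\<dots> = (\<Sum>j<n. \<Sum>is\<in>tuples t {..<n}. (-1) ^ s * (D j is * H (j # is)))"
    proof (intro sum.cong refl)
      fix j zs assume "zs \<in> tuples t {..<n}"
      hence l: "length zs = t" by (simp add: tuples_iff)
      have "((-1::real) ^ (s + k)) * (-1) ^ k = (-1) ^ s"
        by (simp add: power_add mult.assoc flip: power_mult_distrib)
      thus "(-1) ^ (s + k) * D (ins k j zs ! k) (del_nth k (ins k j zs)) * H (ins k j zs) = (-1) ^ s * (D j zs * H (j # zs))"
        using k l H[OF k l, of j] by (simp add: mult_ac)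
    qed
    also have "\<dots> = (-1) ^ s * (\<Sum>is\<in>tuples t {..<n}. \<Sum>j<n. D j is * H (j # is))"
      by (simp add: sum_distrib_left sum.swap[of _ "{..<n}"])
    finally show "(\<Sum>is\<in>tuples (Suc t) {..<n}. (-1) ^ (s + k) * D (is ! k) (del_nth k is) * H is)
       = (-1) ^ s * (\<Sum>is\<in>tuples t {..<n}. \<Sum>j<n. D j is * H (j # is))" .
  qed
  also have "\<dots> = real (Suc t) * ((-1) ^ s * (\<Sum>is\<in>tuples t {..<n}. \<Sum>j<n. D j is * H (j # is)))"
    by simp
  finally show ?thesis .
qed

lemma reorder5: "(\<Sum>a\<in>A. \<Sum>b\<in>B. \<Sum>c\<in>C. \<Sum>d\<in>D. \<Sum>e\<in>E. f a b c d e) =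
   (\<Sum>b\<in>B. \<Sum>d\<in>D. \<Sum>e\<in>E. \<Sum>c\<in>C. \<Sum>a\<in>A. f a b c d e)"
proof -
  have "(\<Sum>a\<in>A. \<Sum>b\<in>B. \<Sum>c\<in>C. \<Sum>d\<in>D. \<Sum>e\<in>E. f a b c d e) =
        (\<Sum>a\<in>A. \<Sum>c\<in>C. \<Sum>b\<in>B. \<Sum>d\<in>D. \<Sum>e\<in>E. f a b c d e)"
    by (intro sum.cong refl) (rule sum.swap)
  also have "\<dots> = (\<Sum>a\<in>A. \<Sum>b\<in>B. \<Sum>d\<in>D. \<Sum>e\<in>E. \<Sum>c\<in>C. f a b c d e)"
    by (intro sum.cong refl) (rule swap_out3[symmetric])
  also have "\<dots> = (\<Sum>b\<in>B. \<Sum>d\<in>D. \<Sum>e\<in>E. \<Sum>a\<in>A. \<Sum>c\<in>C. f a b c d e)"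
    by (rule swap_out3[symmetric])
  also have "\<dots> = (\<Sum>b\<in>B. \<Sum>d\<in>D. \<Sum>e\<in>E. \<Sum>c\<in>C. \<Sum>a\<in>A. f a b c d e)"
    by (intro sum.cong refl) (rule sum.swap)
  finally show ?thesis .
qed

lemma part1_inner:
  fixes Wd :: "nat \<Rightarrow> nat list \<Rightarrow> nat list list \<Rightarrow> nat list \<Rightarrow> nat list \<Rightarrow> real"
    and Hj :: "nat list list \<Rightarrow> nat list \<Rightarrow> nat list \<Rightarrow> real"
    and Y :: "nat \<Rightarrow> nat list \<Rightarrow> nat \<Rightarrow> real"
  assumes HM: "\<And>k I \<sigma> Is \<sigma>s zs. k \<le> s \<Longrightarrow> length Is = s \<Longrightarrow> length \<sigma>s = s \<Longrightarrow>
       Hj (ins k I Is) (ins k \<sigma> \<sigma>s) zs = (-1) ^ k * Hj (I # Is) (\<sigma> # \<sigma>s) zs"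
    and HC: "\<And>I \<sigma> Is \<sigma>s zs. length Is = s \<Longrightarrow> length \<sigma>s = s \<Longrightarrow>
       Hj (I # Is) (\<sigma> # \<sigma>s) zs = (-1) ^ s * (\<Sum>j<n. Y \<sigma> I j * Hj Is \<sigma>s (j # zs))"
  shows "(\<Sum>Is\<in>tuples (Suc s) TI. \<Sum>\<sigma>s\<in>tuples (Suc s) {..<m}. \<Sum>zs\<in>TT.
      (\<Sum>k<Suc s. (-1) ^ k * Wd (\<sigma>s ! k) (Is ! k) (del_nth k Is) (del_nth k \<sigma>s) zs) * Hj Is \<sigma>s zs)
    = real (Suc s) * ((-1) ^ s * (\<Sum>Is\<in>tuples s TI. \<Sum>\<sigma>s\<in>tuples s {..<m}. \<Sum>zs\<in>TT. \<Sum>j<n.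
        (\<Sum>\<sigma><m. \<Sum>I\<in>TI. Y \<sigma> I j * Wd \<sigma> I Is \<sigma>s zs) * Hj Is \<sigma>s (j # zs)))"
proof -
  define V where "V = (\<Sum>I\<in>TI. \<Sum>Is\<in>tuples s TI. \<Sum>\<sigma><m. \<Sum>\<sigma>s\<in>tuples s {..<m}. \<Sum>zs\<in>TT.
        Wd \<sigma> I Is \<sigma>s zs * (\<Sum>j<n. Y \<sigma> I j * Hj Is \<sigma>s (j # zs)))"
  have "(\<Sum>Is\<in>tuples (Suc s) TI. \<Sum>\<sigma>s\<in>tuples (Suc s) {..<m}. \<Sum>zs\<in>TT.
      (\<Sum>k<Suc s. (-1) ^ k * Wd (\<sigma>s ! k) (Is ! k) (del_nth k Is) (del_nth k \<sigma>s) zs) * Hj Is \<sigma>s zs)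
    = (\<Sum>Is\<in>tuples (Suc s) TI. \<Sum>\<sigma>s\<in>tuples (Suc s) {..<m}. \<Sum>zs\<in>TT.
      \<Sum>k<Suc s. (-1) ^ k * Wd (\<sigma>s ! k) (Is ! k) (del_nth k Is) (del_nth k \<sigma>s) zs * Hj Is \<sigma>s zs)"
    by (simp only: sum_distrib_right)
  also have "\<dots> = (\<Sum>k<Suc s. \<Sum>Is\<in>tuples (Suc s) TI. \<Sum>\<sigma>s\<in>tuples (Suc s) {..<m}. \<Sum>zs\<in>TT.
      (-1) ^ k * Wd (\<sigma>s ! k) (Is ! k) (del_nth k Is) (del_nth k \<sigma>s) zs * Hj Is \<sigma>s zs)"
    by (rule swap_out3)
  also have "\<dots> = (\<Sum>k<Suc s. (-1) ^ s * V)"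
  proof (intro sum.cong refl)
    fix k assume "k \<in> {..<Suc s}"
    hence k: "k \<le> s" by simp
    have "(\<Sum>Is\<in>tuples (Suc s) TI. \<Sum>\<sigma>s\<in>tuples (Suc s) {..<m}. \<Sum>zs\<in>TT.
      (-1) ^ k * Wd (\<sigma>s ! k) (Is ! k) (del_nth k Is) (del_nth k \<sigma>s) zs * Hj Is \<sigma>s zs)
      = (\<Sum>I\<in>TI. \<Sum>Is\<in>tuples s TI. \<Sum>\<sigma><m. \<Sum>\<sigma>s\<in>tuples s {..<m}. \<Sum>zs\<in>TT.
      (-1) ^ k * Wd (ins k \<sigma> \<sigma>s ! k) (ins k I Is ! k) (del_nth k (ins k I Is)) (del_nth k (ins k \<sigma> \<sigma>s)) zs
         * Hj (ins k I Is) (ins k \<sigma> \<sigma>s) zs)"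
      by (simp only: sum_tuples_Suc[OF k])
    also have "\<dots> = (\<Sum>I\<in>TI. \<Sum>Is\<in>tuples s TI. \<Sum>\<sigma><m. \<Sum>\<sigma>s\<in>tuples s {..<m}. \<Sum>zs\<in>TT.
        (-1) ^ s * (Wd \<sigma> I Is \<sigma>s zs * (\<Sum>j<n. Y \<sigma> I j * Hj Is \<sigma>s (j # zs))))"
    proof (intro sum.cong refl)
      fix I Is \<sigma> \<sigma>s zs assume a: "Is \<in> tuples s TI" "\<sigma>s \<in> tuples s {..<m}"
      have l: "length Is = s" "length \<sigma>s = s" using a by (auto simp: tuples_iff)
      have kk: "((-1::real) ^ k) * (-1) ^ k = 1"
        by (simp flip: power_mult_distrib)
      have "(-1) ^ k * Wd \<sigma> I Is \<sigma>s zs * ((-1) ^ k * ((-1) ^ s * (\<Sum>j<n. Y \<sigma> I j * Hj Is \<sigma>s (j # zs))))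
          = ((-1) ^ k * (-1) ^ k) * ((-1) ^ s * (Wd \<sigma> I Is \<sigma>s zs * (\<Sum>j<n. Y \<sigma> I j * Hj Is \<sigma>s (j # zs))))"
        by (simp only: mult_ac)
      also have "\<dots> = (-1) ^ s * (Wd \<sigma> I Is \<sigma>s zs * (\<Sum>j<n. Y \<sigma> I j * Hj Is \<sigma>s (j # zs)))"
        by (simp only: kk mult_1)
      finally show "(-1) ^ k * Wd (ins k \<sigma> \<sigma>s ! k) (ins k I Is ! k) (del_nth k (ins k I Is)) (del_nth k (ins k \<sigma> \<sigma>s)) zs
         * Hj (ins k I Is) (ins k \<sigma> \<sigma>s) zs =
        (-1) ^ s * (Wd \<sigma> I Is \<sigma>s zs * (\<Sum>j<n. Y \<sigma> I j * Hj Is \<sigma>s (j # zs)))"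
        using k l by (simp only: HM[OF k l] HC[OF l] ins_nth_k del_ins)
    qed
    also have "\<dots> = (-1) ^ s * V" unfolding V_def by (simp only: sum_distrib_left)
    finally show "(\<Sum>Is\<in>tuples (Suc s) TI. \<Sum>\<sigma>s\<in>tuples (Suc s) {..<m}. \<Sum>zs\<in>TT.
      (-1) ^ k * Wd (\<sigma>s ! k) (Is ! k) (del_nth k Is) (del_nth k \<sigma>s) zs * Hj Is \<sigma>s zs) = (-1) ^ s * V" .
  qed
  also have "\<dots> = real (Suc s) * ((-1) ^ s * V)" by simp
  also have "V = (\<Sum>Is\<in>tuples s TI. \<Sum>\<sigma>s\<in>tuples s {..<m}. \<Sum>zs\<in>TT. \<Sum>\<sigma><m. \<Sum>I\<in>TI.
        Wd \<sigma> I Is \<sigma>s zs * (\<Sum>j<n. Y \<sigma> I j * Hj Is \<sigma>s (j # zs)))"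
    unfolding V_def by (rule reorder5)
  also have "\<dots> = (\<Sum>Is\<in>tuples s TI. \<Sum>\<sigma>s\<in>tuples s {..<m}. \<Sum>zs\<in>TT. \<Sum>j<n.
        (\<Sum>\<sigma><m. \<Sum>I\<in>TI. Y \<sigma> I j * Wd \<sigma> I Is \<sigma>s zs) * Hj Is \<sigma>s (j # zs))"
  proof (rule sum.cong[OF refl], rule sum.cong[OF refl], rule sum.cong[OF refl])
    fix Is \<sigma>s zs
    have "(\<Sum>\<sigma><m. \<Sum>I\<in>TI. Wd \<sigma> I Is \<sigma>s zs * (\<Sum>j<n. Y \<sigma> I j * Hj Is \<sigma>s (j # zs))) =
          (\<Sum>\<sigma><m. \<Sum>I\<in>TI. \<Sum>j<n. Y \<sigma> I j * Wd \<sigma> I Is \<sigma>s zs * Hj Is \<sigma>s (j # zs))"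
      by (simp only: sum_distrib_left mult_ac)
    also have "\<dots> = (\<Sum>j<n. \<Sum>\<sigma><m. \<Sum>I\<in>TI. Y \<sigma> I j * Wd \<sigma> I Is \<sigma>s zs * Hj Is \<sigma>s (j # zs))"
      by (rule swap_out2)
    also have "\<dots> = (\<Sum>j<n. (\<Sum>\<sigma><m. \<Sum>I\<in>TI. Y \<sigma> I j * Wd \<sigma> I Is \<sigma>s zs) * Hj Is \<sigma>s (j # zs))"
      by (simp only: sum_distrib_right)
    finally show "(\<Sum>\<sigma><m. \<Sum>I\<in>TI. Wd \<sigma> I Is \<sigma>s zs * (\<Sum>j<n. Y \<sigma> I j * Hj Is \<sigma>s (j # zs))) =
          (\<Sum>j<n. (\<Sum>\<sigma><m. \<Sum>I\<in>TI. Y \<sigma> I j * Wd \<sigma> I Is \<sigma>s zs) * Hj Is \<sigma>s (j # zs))" .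
  qed
  finally show ?thesis .
qed


lemma jcoords_mono: "k \<le> k' \<Longrightarrow> jcoords n m k \<subseteq> jcoords n m k'"
  unfolding jcoords_def by auto

lemma smk_hyperjac: "open V \<Longrightarrow> smk V k (hyperjac n Is \<sigma>s zs)"
proof -
  assume o: "open V"
  have e: "hyperjac n Is \<sigma>s zs = (\<lambda>q. \<Sum>js\<in>tuples (length Is) {..<n}. levi n (js @ zs) *
      (\<Prod>l<length Is. q (YC (\<sigma>s ! l) (mset ((Is ! l) @ [js ! l])))))"
    by (rule ext) (simp add: hyperjac_def)
  show ?thesis unfolding e
    by (rule smk_sum[OF _ o], simp, rule smk_mult[OF o smk_const], rule smk_prod[OF _ o], simp, rule smk_coord)
qed

lemma hj_dep:
  assumes Is: "Is \<in> tuples s (tuples (r - 1) {..<n})" and \<sigma>s: "\<sigma>s \<in> tuples s {..<m}" and r: "r \<ge> 1"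
    and pq: "\<forall>c\<in>jcoords n m r. p c = q c"
  shows "hyperjac n Is \<sigma>s zs p = hyperjac n Is \<sigma>s zs q"
  unfolding hyperjac_def
proof (intro sum.cong refl arg_cong2[where f = "(*)"] prod.cong)
  fix js l assume js: "js \<in> tuples (length Is) {..<n}" and l: "l \<in> {..<length Is}"
  have ls: "length Is = s" "length \<sigma>s = s" using Is \<sigma>s by (auto simp: tuples_iff)
  have "\<sigma>s ! l \<in> set \<sigma>s" using l ls by (intro nth_mem) simp
  hence "\<sigma>s ! l < m" using \<sigma>s by (auto simp: tuples_iff)
  moreover have "Is ! l \<in> set Is" using l by (intro nth_mem) simp
  hence "Is ! l \<in> tuples (r - 1) {..<n}" using Is unfolding tuples_iff[of Is] by blast
  moreover have "js ! l \<in> set js" using l js by (intro nth_mem) (simp add: tuples_iff)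
  hence "js ! l < n" using js by (auto simp: tuples_iff)
  ultimately have "YC (\<sigma>s ! l) (mset (Is ! l @ [js ! l])) \<in> jcoords n m r"
    using r unfolding jcoords_def by (auto simp: tuples_iff)
  thus "p (YC (\<sigma>s ! l) (mset (Is ! l @ [js ! l]))) = q (YC (\<sigma>s ! l) (mset (Is ! l @ [js ! l])))"
    using pq by blast
qed

lemma fder_sum_smk: "finite S \<Longrightarrow> open V \<Longrightarrow> p \<in> V \<Longrightarrow> (\<And>x. x \<in> S \<Longrightarrow> smk V 0 (F x)) \<Longrightarrow>
  fder n m q i (\<lambda>y. \<Sum>x\<in>S. F x y) p = (\<Sum>x\<in>S. fder n m q i (F x) p)"
  by (rule fder_sum) (auto intro: smk_ldiff)


lemma coef_aux: "(a::real) \<noteq> 0 \<Longrightarrow> b \<noteq> 0 \<Longrightarrow> c \<noteq> 0 \<Longrightarrow> 1 / (a * (b * c)) * b * x = x / (a * c)"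
  by (simp add: field_simps)

lemma coef_aux2: "(a::real) \<noteq> 0 \<Longrightarrow> b \<noteq> 0 \<Longrightarrow> c \<noteq> 0 \<Longrightarrow> 1 / ((b * a) * c) * b * x = x / (a * c)"
  by (simp add: field_simps)

theorem mainTheorem5:
  fixes n m r :: nat and V :: "jpoint set" and A :: afam
  assumes r: "r \<ge> 1"
    and V: "chart_domain n m V"
    and smooth: "\<And>s Is \<sigma>s is. s < n \<Longrightarrow> Is \<in> tuples s (tuples (r - 1) {..<n}) \<Longrightarrow>
        \<sigma>s \<in> tuples s {..<m} \<Longrightarrow> is \<in> tuples (n - 1 - s) {..<n} \<Longrightarrow>
        jet_smooth n m (r - 1) V (A Is \<sigma>s is)"
    and symm: "\<And>s Is \<sigma>s is P Q p. s < n \<Longrightarrow> Is \<in> tuples s (tuples (r - 1) {..<n}) \<Longrightarrow>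
        \<sigma>s \<in> tuples s {..<m} \<Longrightarrow> is \<in> tuples (n - 1 - s) {..<n} \<Longrightarrow>
        P permutes {..<s} \<Longrightarrow> Q permutes {..<n - 1 - s} \<Longrightarrow> p \<in> V \<Longrightarrow>
        A (permute_list P Is) (permute_list P \<sigma>s) (permute_list Q is) p
          = real_of_int (sign P * sign Q) * A Is \<sigma>s is p"
  shows "\<exists>W :: nat \<Rightarrow> jpoint \<Rightarrow> real.
           (\<forall>j<n. jet_smooth n m r V (W j)) \<and>
           (\<forall>p \<in> V. Lagr n m r A p = (\<Sum>j<n. fder n m (r + 1) j (W j) p))"
proof -
  have oV: "open V" using V by (simp add: chart_domain_def)
  define TI where "TI = tuples (r - 1) {..<n}"
  define e where "e s = (-1::real) ^ s / (fact s * fact (n - 1 - s))" for s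
  define Wi where "Wi s j q = (\<Sum>Is\<in>tuples s TI. \<Sum>\<sigma>s\<in>tuples s {..<m}. \<Sum>zs\<in>tuples (n - 1 - s) {..<n}.
        A Is \<sigma>s zs q * hyperjac n Is \<sigma>s (j # zs) q)" for s j q
  define W where "W j q = (\<Sum>s<n. e s * Wi s j q)" for j q
  have Asm: "smk V k (A Is \<sigma>s zs)"
    if "s < n" "Is \<in> tuples s TI" "\<sigma>s \<in> tuples s {..<m}" "zs \<in> tuples (n - 1 - s) {..<n}" for s Is \<sigma>s zs k
    using smooth[OF that[unfolded TI_def]] by (simp add: jet_smooth_def smooth_on_smk)
  have Adep: "\<forall>p q. (\<forall>c\<in>jcoords n m (r - 1). p c = q c) \<longrightarrow> A Is \<sigma>s zs p = A Is \<sigma>s zs q"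
    if "s < n" "Is \<in> tuples s TI" "\<sigma>s \<in> tuples s {..<m}" "zs \<in> tuples (n - 1 - s) {..<n}" for s Is \<sigma>s zs
    using smooth[OF that[unfolded TI_def]] by (simp add: jet_smooth_def)
  have Wi_sm: "smk V k (Wi s j)" if "s < n" for s j k
    unfolding Wi_def
    by (intro smk_sum[OF _ oV] smk_mult[OF oV] smk_hyperjac[OF oV] Asm[OF that]) (auto simp: TI_def)
  have W_sm: "smk V k (W j)" for j k
    unfolding W_def by (intro smk_sum[OF _ oV] smk_mult[OF oV] smk_const Wi_sm) auto
  have W_dep: "W j p = W j q" if pq: "\<forall>c\<in>jcoords n m r. p c = q c" for j p q
  proof -
    have pq': "\<forall>c\<in>jcoords n m (r - 1). p c = q c" using pq jcoords_mono[of "r - 1" r n m] by auto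
    show ?thesis unfolding W_def Wi_def
    proof (intro sum.cong refl arg_cong2[where f = "(*)"])
      fix s Is \<sigma>s zs assume a: "s \<in> {..<n}" "Is \<in> tuples s TI" "\<sigma>s \<in> tuples s {..<m}" "zs \<in> tuples (n - 1 - s) {..<n}"
      show "A Is \<sigma>s zs p = A Is \<sigma>s zs q" using Adep[of s Is \<sigma>s zs] a pq' by auto
      show "hyperjac n Is \<sigma>s (j # zs) p = hyperjac n Is \<sigma>s (j # zs) q"
        using hj_dep[of Is s r n \<sigma>s m p q] a r pq by (auto simp: TI_def)
    qed
  qed
  have js: "jet_smooth n m r V (W j)" for j
    unfolding jet_smooth_def smooth_on_smk using W_dep W_sm by blast
  have main: "Lagr n m r A p = (\<Sum>j<n. fder n m (r + 1) j (W j) p)" if p: "p \<in> V" for p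
  proof -
    define hj where "hj Is \<sigma>s zs = hyperjac n Is \<sigma>s zs p" for Is \<sigma>s zs
    define D where "D j Is \<sigma>s zs = fder n m (r - 1) j (A Is \<sigma>s zs) p" for j Is \<sigma>s zs
    define Y where "Y \<sigma> I j = p (YC \<sigma> (mset (I @ [j])))" for \<sigma> I j
    define Wd where "Wd \<sigma> I Is \<sigma>s zs = wpd n \<sigma> I (A Is \<sigma>s zs) p" for \<sigma> I Is \<sigma>s zs
    define c where "c s = 1 / (fact s * fact (n - s) :: real)" for s
    define Q1 where "Q1 s = (\<Sum>Is\<in>tuples s TI. \<Sum>\<sigma>s\<in>tuples s {..<m}. \<Sum>zs\<in>tuples (n - 1 - s) {..<n}. \<Sum>j<n.
        (\<Sum>\<sigma><m. \<Sum>I\<in>TI. Y \<sigma> I j * Wd \<sigma> I Is \<sigma>s zs) * hj Is \<sigma>s (j # zs))" for s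
    define Q2 where "Q2 s = (\<Sum>Is\<in>tuples s TI. \<Sum>\<sigma>s\<in>tuples s {..<m}. \<Sum>zs\<in>tuples (n - 1 - s) {..<n}. \<Sum>j<n.
        D j Is \<sigma>s zs * hj Is \<sigma>s (j # zs))" for s
    define P1 where "P1 s = (\<Sum>Is\<in>tuples s TI. \<Sum>\<sigma>s\<in>tuples s {..<m}. \<Sum>zs\<in>tuples (n - s) {..<n}.
        (\<Sum>k<s. (-1) ^ k * Wd (\<sigma>s ! k) (Is ! k) (del_nth k Is) (del_nth k \<sigma>s) zs) * hj Is \<sigma>s zs)" for s
    define P2 where "P2 s = (\<Sum>Is\<in>tuples s TI. \<Sum>\<sigma>s\<in>tuples s {..<m}. \<Sum>zs\<in>tuples (n - s) {..<n}.
        (\<Sum>k<n - s. (-1) ^ (s + k) * D (zs ! k) Is \<sigma>s (del_nth k zs)) * hj Is \<sigma>s zs)" for s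
    define Kf where "Kf (s::nat) Is \<sigma>s zs j = fder n m r j (A Is \<sigma>s zs) p * hj Is \<sigma>s (j # zs) +
        A Is \<sigma>s zs p * fder n m (Suc r) j (hyperjac n Is \<sigma>s (j # zs)) p" for s Is \<sigma>s zs j
    have fA: "fder n m (Suc r) j (\<lambda>q. A Is \<sigma>s zs q * hyperjac n Is \<sigma>s (j # zs) q) p = Kf s Is \<sigma>s zs j"
      if a: "s < n" "Is \<in> tuples s TI" "\<sigma>s \<in> tuples s {..<m}" "zs \<in> tuples (n - 1 - s) {..<n}" for s Is \<sigma>s zs j
    proof -
      have "fder n m (Suc r) j (\<lambda>q. A Is \<sigma>s zs q * hyperjac n Is \<sigma>s (j # zs) q) p =
          fder n m (Suc r) j (A Is \<sigma>s zs) p * hyperjac n Is \<sigma>s (j # zs) p + A Is \<sigma>s zs p * fder n m (Suc r) j (hyperjac n Is \<sigma>s (j # zs)) p"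
        by (rule fder_mult) (auto intro: smk_ldiff[OF Asm[OF a, of 0] p] smk_ldiff[OF smk_hyperjac[OF oV, of 0] p])
      also have "fder n m (Suc r) j (A Is \<sigma>s zs) p = fder n m r j (A Is \<sigma>s zs) p"
        by (rule fder_drop[OF Adep[OF a]]) (use r in simp)
      finally show ?thesis unfolding Kf_def hj_def .
    qed
    have smA: "smk V 0 (\<lambda>q. A Is \<sigma>s zs q * hyperjac n Is \<sigma>s (j # zs) q)"
      if a: "s < n" "Is \<in> tuples s TI" "\<sigma>s \<in> tuples s {..<m}" "zs \<in> tuples (n - 1 - s) {..<n}" for s Is \<sigma>s zs j
      by (rule smk_mult[OF oV Asm[OF a] smk_hyperjac[OF oV]])
    have fW: "fder n m (Suc r) j (W j) p = (\<Sum>s<n. e s * (\<Sum>Is\<in>tuples s TI. \<Sum>\<sigma>s\<in>tuples s {..<m}.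
        \<Sum>zs\<in>tuples (n - 1 - s) {..<n}. Kf s Is \<sigma>s zs j))" for j
    proof -
      have We: "W j = (\<lambda>q. \<Sum>s<n. e s * Wi s j q)" by (rule ext) (simp add: W_def)
      have "fder n m (Suc r) j (W j) p = (\<Sum>s<n. fder n m (Suc r) j (\<lambda>q. e s * Wi s j q) p)"
        unfolding We by (rule fder_sum_smk[OF _ oV p]) (auto intro!: smk_mult[OF oV smk_const] Wi_sm)
      also have "\<dots> = (\<Sum>s<n. e s * fder n m (Suc r) j (Wi s j) p)"
        by (intro sum.cong refl fder_cmult smk_ldiff[OF Wi_sm p]) simp
      also have "\<dots> = (\<Sum>s<n. e s * (\<Sum>Is\<in>tuples s TI. \<Sum>\<sigma>s\<in>tuples s {..<m}.
        \<Sum>zs\<in>tuples (n - 1 - s) {..<n}. Kf s Is \<sigma>s zs j))"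
      proof (rule sum.cong[OF refl], rule arg_cong[where f = "\<lambda>x. e _ * x"])
        fix s assume "s \<in> {..<n}"
        hence s: "s < n" by simp
        have fin: "finite (tuples s TI)" "finite (tuples s {..<m})" "finite (tuples (n - 1 - s) {..<n})"
          by (simp_all add: TI_def)
        have Wie: "Wi s j = (\<lambda>q. \<Sum>Is\<in>tuples s TI. \<Sum>\<sigma>s\<in>tuples s {..<m}. \<Sum>zs\<in>tuples (n - 1 - s) {..<n}.
            A Is \<sigma>s zs q * hyperjac n Is \<sigma>s (j # zs) q)" by (rule ext) (simp add: Wi_def)
        have "fder n m (Suc r) j (Wi s j) p = (\<Sum>Is\<in>tuples s TI. fder n m (Suc r) j (\<lambda>q. \<Sum>\<sigma>s\<in>tuples s {..<m}.
            \<Sum>zs\<in>tuples (n - 1 - s) {..<n}. A Is \<sigma>s zs q * hyperjac n Is \<sigma>s (j # zs) q) p)"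
          unfolding Wie by (rule fder_sum_smk[OF fin(1) oV p]) (intro smk_sum[OF fin(2) oV] smk_sum[OF fin(3) oV] smA[OF s])
        also have "\<dots> = (\<Sum>Is\<in>tuples s TI. \<Sum>\<sigma>s\<in>tuples s {..<m}. fder n m (Suc r) j (\<lambda>q.
            \<Sum>zs\<in>tuples (n - 1 - s) {..<n}. A Is \<sigma>s zs q * hyperjac n Is \<sigma>s (j # zs) q) p)"
          by (rule sum.cong[OF refl], rule fder_sum_smk[OF fin(2) oV p]) (intro smk_sum[OF fin(3) oV] smA[OF s])
        also have "\<dots> = (\<Sum>Is\<in>tuples s TI. \<Sum>\<sigma>s\<in>tuples s {..<m}. \<Sum>zs\<in>tuples (n - 1 - s) {..<n}.
            fder n m (Suc r) j (\<lambda>q. A Is \<sigma>s zs q * hyperjac n Is \<sigma>s (j # zs) q) p)"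
          by (rule sum.cong[OF refl], rule sum.cong[OF refl], rule fder_sum_smk[OF fin(3) oV p]) (rule smA[OF s])
        also have "\<dots> = (\<Sum>Is\<in>tuples s TI. \<Sum>\<sigma>s\<in>tuples s {..<m}. \<Sum>zs\<in>tuples (n - 1 - s) {..<n}. Kf s Is \<sigma>s zs j)"
          by (rule sum.cong[OF refl], rule sum.cong[OF refl], rule sum.cong[OF refl], rule fA[OF s])
        finally show "fder n m (Suc r) j (Wi s j) p = (\<Sum>Is\<in>tuples s TI. \<Sum>\<sigma>s\<in>tuples s {..<m}.
          \<Sum>zs\<in>tuples (n - 1 - s) {..<n}. Kf s Is \<sigma>s zs j)" .
      qed
      finally show ?thesis .
    qed
    have RHS: "(\<Sum>j<n. fder n m (r + 1) j (W j) p) = (\<Sum>s<n. e s * (Q1 s + Q2 s))"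
    proof -
      have "(\<Sum>j<n. fder n m (r + 1) j (W j) p) = (\<Sum>j<n. \<Sum>s<n. e s * (\<Sum>Is\<in>tuples s TI. \<Sum>\<sigma>s\<in>tuples s {..<m}.
        \<Sum>zs\<in>tuples (n - 1 - s) {..<n}. Kf s Is \<sigma>s zs j))" by (simp add: fW)
      also have "\<dots> = (\<Sum>s<n. e s * (\<Sum>j<n. \<Sum>Is\<in>tuples s TI. \<Sum>\<sigma>s\<in>tuples s {..<m}.
        \<Sum>zs\<in>tuples (n - 1 - s) {..<n}. Kf s Is \<sigma>s zs j))"
        by (subst sum.swap) (simp only: sum_distrib_left)
      also have "\<dots> = (\<Sum>s<n. e s * (Q1 s + Q2 s))"
      proof (rule sum.cong[OF refl], rule arg_cong[where f = "\<lambda>x. e _ * x"])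
        fix s assume "s \<in> {..<n}"
        have "(\<Sum>j<n. \<Sum>Is\<in>tuples s TI. \<Sum>\<sigma>s\<in>tuples s {..<m}. \<Sum>zs\<in>tuples (n - 1 - s) {..<n}. Kf s Is \<sigma>s zs j)
          = (\<Sum>Is\<in>tuples s TI. \<Sum>\<sigma>s\<in>tuples s {..<m}. \<Sum>zs\<in>tuples (n - 1 - s) {..<n}. \<Sum>j<n. Kf s Is \<sigma>s zs j)"
          by (rule swap_out3[symmetric])
        also have "\<dots> = (\<Sum>Is\<in>tuples s TI. \<Sum>\<sigma>s\<in>tuples s {..<m}. \<Sum>zs\<in>tuples (n - 1 - s) {..<n}. \<Sum>j<n.
            (\<Sum>\<sigma><m. \<Sum>I\<in>TI. Y \<sigma> I j * Wd \<sigma> I Is \<sigma>s zs) * hj Is \<sigma>s (j # zs) + D j Is \<sigma>s zs * hj Is \<sigma>s (j # zs))"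
        proof (rule sum.cong[OF refl], rule sum.cong[OF refl], rule sum.cong[OF refl])
          fix Is \<sigma>s zs assume a: "Is \<in> tuples s TI" "\<sigma>s \<in> tuples s {..<m}"
          have dv: "(\<Sum>j<n. fder n m (Suc r) j (hyperjac n Is \<sigma>s (j # zs)) p) = 0"
            by (rule hj_divfree) (use a r in \<open>auto simp: TI_def\<close>)
          have rr: "r = Suc (r - 1)" using r by simp
          have fr: "fder n m r j F p = fder n m (r - 1) j F p +
              (\<Sum>\<sigma><m. \<Sum>I\<in>TI. p (YC \<sigma> (mset (I @ [j]))) * wpd n \<sigma> I F p)" for j F
            using fder_Suc[of n m "r - 1" j F p] rr unfolding TI_def by simp
          have "(\<Sum>j<n. Kf s Is \<sigma>s zs j) = (\<Sum>j<n. fder n m r j (A Is \<sigma>s zs) p * hj Is \<sigma>s (j # zs))"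
            unfolding Kf_def sum.distrib sum_distrib_left[symmetric] dv by simp
          also have "\<dots> = (\<Sum>j<n. (\<Sum>\<sigma><m. \<Sum>I\<in>TI. Y \<sigma> I j * Wd \<sigma> I Is \<sigma>s zs) * hj Is \<sigma>s (j # zs) + D j Is \<sigma>s zs * hj Is \<sigma>s (j # zs))"
            unfolding fr Y_def Wd_def D_def by (simp add: distrib_right add.commute)
          finally show "(\<Sum>j<n. Kf s Is \<sigma>s zs j) = (\<Sum>j<n. (\<Sum>\<sigma><m. \<Sum>I\<in>TI. Y \<sigma> I j * Wd \<sigma> I Is \<sigma>s zs) * hj Is \<sigma>s (j # zs) + D j Is \<sigma>s zs * hj Is \<sigma>s (j # zs))" .
        qed
        also have "\<dots> = Q1 s + Q2 s"
          unfolding Q1_def Q2_def by (simp only: sum.distrib)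
        finally show "(\<Sum>j<n. \<Sum>Is\<in>tuples s TI. \<Sum>\<sigma>s\<in>tuples s {..<m}. \<Sum>zs\<in>tuples (n - 1 - s) {..<n}. Kf s Is \<sigma>s zs j) = Q1 s + Q2 s" .
      qed
      finally show ?thesis .
    qed
    have inner: "(\<Sum>Is\<in>tuples s TI. \<Sum>\<sigma>s\<in>tuples s {..<m}. \<Sum>zs\<in>tuples (n - s) {..<n}.
        calL n m r A Is \<sigma>s zs p * hyperjac n Is \<sigma>s zs p) = P1 s + P2 s" for s
      unfolding P1_def P2_def sum.distrib[symmetric]
      by (rule sum.cong[OF refl], rule sum.cong[OF refl], rule sum.cong[OF refl])
         (auto simp: calL_def tuples_iff hj_def Wd_def D_def distrib_right)
    have L: "Lagr n m r A p = (\<Sum>s\<le>n. c s * (P1 s + P2 s))"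
      unfolding Lagr_def TI_def[symmetric] inner c_def by simp
    have P10: "P1 0 = 0" unfolding P1_def by simp
    have P2n: "P2 n = 0" unfolding P2_def by simp
    have P1S: "c (Suc s) * P1 (Suc s) = e s * Q1 s" if "s < n" for s
    proof -
      have nn: "n - 1 - s = n - Suc s" by simp
      have "P1 (Suc s) = real (Suc s) * ((-1) ^ s * Q1 s)"
        unfolding P1_def Q1_def nn
      proof (rule part1_inner)
        fix k :: nat and I :: "nat list" and \<sigma> :: nat and Is :: "nat list list" and \<sigma>s zs :: "nat list"
        assume "k \<le> s" "length Is = s" "length \<sigma>s = s"
        thus "hj (ins k I Is) (ins k \<sigma> \<sigma>s) zs = (-1) ^ k * hj (I # Is) (\<sigma> # \<sigma>s) zs"
          unfolding hj_def by (intro hyperjac_move) auto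
      next
        fix I :: "nat list" and \<sigma> :: nat and Is :: "nat list list" and \<sigma>s zs :: "nat list"
        assume "length Is = s" "length \<sigma>s = s"
        thus "hj (I # Is) (\<sigma> # \<sigma>s) zs = (-1) ^ s * (\<Sum>j<n. Y \<sigma> I j * hj Is \<sigma>s (j # zs))"
          unfolding hj_def Y_def using hyperjac_cons[of \<sigma>s Is n I \<sigma> zs p] by simp
      qed
      moreover have "c (Suc s) * real (Suc s) * (-1) ^ s = e s"
        unfolding c_def e_def fact_Suc nn by (rule coef_aux2) simp_all
      ultimately show ?thesis by (simp add: mult_ac)
    qed
    have P2s: "c s * P2 s = e s * Q2 s" if "s < n" for s
    proof -
      define t where "t = n - 1 - s"
      have nt: "n - s = Suc t" using that by (simp add: t_def)
      have "P2 s = (\<Sum>Is\<in>tuples s TI. \<Sum>\<sigma>s\<in>tuples s {..<m}. real (Suc t) * ((-1) ^ s *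
          (\<Sum>zs\<in>tuples t {..<n}. \<Sum>j<n. D j Is \<sigma>s zs * hj Is \<sigma>s (j # zs))))"
        unfolding P2_def nt
      proof (rule sum.cong[OF refl], rule sum.cong[OF refl])
        fix Is \<sigma>s
        show "(\<Sum>zs\<in>tuples (Suc t) {..<n}. (\<Sum>k<Suc t. (-1) ^ (s + k) * D (zs ! k) Is \<sigma>s (del_nth k zs)) * hj Is \<sigma>s zs)
          = real (Suc t) * ((-1) ^ s * (\<Sum>zs\<in>tuples t {..<n}. \<Sum>j<n. D j Is \<sigma>s zs * hj Is \<sigma>s (j # zs)))"
          by (rule part2_inner[where D = "\<lambda>j zs. D j Is \<sigma>s zs" and H = "hj Is \<sigma>s"]) (simp add: hj_def hyperjac_ins_is)
      qed
      also have "\<dots> = real (Suc t) * ((-1) ^ s * Q2 s)"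
        unfolding Q2_def t_def[symmetric] by (simp only: sum_distrib_left)
      finally have e1: "P2 s = real (Suc t) * ((-1) ^ s * Q2 s)" .
      have "c s * real (Suc t) * (-1) ^ s = e s"
        unfolding c_def e_def nt t_def[symmetric] fact_Suc
        by (rule coef_aux) simp_all
      thus ?thesis unfolding e1 by (simp add: mult_ac)
    qed
    have "Lagr n m r A p = (\<Sum>s\<le>n. c s * P1 s) + (\<Sum>s\<le>n. c s * P2 s)"
      unfolding L by (simp add: distrib_left sum.distrib)
    also have "(\<Sum>s\<le>n. c s * P1 s) = (\<Sum>s<n. e s * Q1 s)"
      by (simp add: sum.atMost_shift P10 P1S)
    also have "(\<Sum>s\<le>n. c s * P2 s) = (\<Sum>s<n. e s * Q2 s)"
      by (simp add: lessThan_Suc_atMost[symmetric] P2n P2s)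
    finally show ?thesis unfolding RHS by (simp add: distrib_left sum.distrib)
  qed
  show ?thesis using js main by blast
qed

end
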